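(* Let $n\ge3$, $a\in\mathbb{C}^\times$, and let $E_{i,j}$ denote the matrix units in $gl_{2n}(\mathbb{C})$. The assignment $$\psi_a(e_i)=E_{i,i+1}-E_{n+i+1,n+i},\quad \psi_a(f_i)=E_{i+1,i}-E_{n+i,n+i+1}\quad(1\le i\le n-1),$$ $$\psi_a(e_n)=E_{n,n+1}+a^{-1}E_{1,2n},\quad \psi_a(f_n)=E_{n+1,n}+aE_{2n,1}$$ extends to a Lie algebra homomorphism $\psi_a:\mathrm{gim}(M_n)\to sl_{2n}$. Moreover: if $a\neq\pm1$ then the image of $\psi_a$ is $sl_{2n}$; if $a=1$ the image of $\psi_a$ is isomorphic to $sp_{2n}$; if $a=-1$ the image of $\psi_a$ is isomorphic to $so_{2n}$.
   Context: For $n\geq 3$, $M_n=(m_{i,j})$ is the $n\times n$ integer matrix with $m_{i,i}=2$, $m_{i,i+1}=m_{i+1,i}=-1$ ($1\le i\le n-1$), $m_{1,n}=m_{n,1}=1$, all other entries $0$. $\mathrm{gim}(M_n)$ is the complex Lie algebra generated by $e_i,f_i,h_i$ ($1\le i\le n$) with relations: (R1) $[h_i,e_j]=m_{i,j}e_j$, $[h_i,f_j]=-m_{i,j}f_j$, $[e_i,f_i]=h_i$ for all $i,j$; (R2) for $i\ne j$ with $m_{i,j}\le0$: $[e_i,f_j]=0=[f_i,e_j]$, $(\mathrm{ad}\,e_i)^{1-m_{i,j}}e_j=0=(\mathrm{ad}\,f_i)^{1-m_{i,j}}f_j$; (R3) for $i\ne j$ with $m_{i,j}>0$: $[e_i,e_j]=0=[f_i,f_j]$,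 $(\mathrm{ad}\,e_i)^{m_{i,j}+1}f_j=0=(\mathrm{ad}\,f_i)^{m_{i,j}+1}e_j$. *)

theory Defs
  imports Complex_Main
begin

text \<open>Square matrices of size N are represented as functions nat => nat => complex,
  with 1-based indices in {1..N} and all entries outside {1..N} x {1..N} equal to 0.\<close>

type_synonym cmat = "nat \<Rightarrow> nat \<Rightarrow> complex"

definition is_mat :: "nat \<Rightarrow> cmat \<Rightarrow> bool" where
  "is_mat N A \<longleftrightarrow> (\<forall>p q. (p \<notin> {1..N} \<or> q \<notin> {1..N}) \<longrightarrow> A p q = 0)"

definition mzero :: cmat where "mzero = (\<lambda>p q. 0)"
definition madd :: "cmat \<Rightarrow> cmat \<Rightarrow> cmat" where "madd A B = (\<lambda>p q. A p q + B p q)"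
definition msub :: "cmat \<Rightarrow> cmat \<Rightarrow> cmat" where "msub A B = (\<lambda>p q. A p q - B p q)"
definition msmult :: "complex \<Rightarrow> cmat \<Rightarrow> cmat" where "msmult c A = (\<lambda>p q. c * A p q)"
definition mtrans :: "cmat \<Rightarrow> cmat" where "mtrans A = (\<lambda>p q. A q p)"
definition mmul :: "nat \<Rightarrow> cmat \<Rightarrow> cmat \<Rightarrow> cmat" where
  "mmul N A B = (\<lambda>p q. \<Sum>k\<in>{1..N}. A p k * B k q)"
definition mtrace :: "nat \<Rightarrow> cmat \<Rightarrow> complex" where
  "mtrace N A = (\<Sum>k\<in>{1..N}. A k k)"

definition munit :: "nat \<Rightarrow> nat \<Rightarrow> cmat" where
  "munit i j = (\<lambda>p q. if p = i \<and> q = j then 1 else 0)"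

definition bracket :: "nat \<Rightarrow> cmat \<Rightarrow> cmat \<Rightarrow> cmat" where
  "bracket N A B = msub (mmul N A B) (mmul N B A)"

definition gl_set :: "nat \<Rightarrow> cmat set" where "gl_set N = {A. is_mat N A}"
definition sl_set :: "nat \<Rightarrow> cmat set" where "sl_set N = {A. is_mat N A \<and> mtrace N A = 0}"

text \<open>sp_{2n}: X^T J + J X = 0 with J = [[0, I_n], [-I_n, 0]].\<close>
definition Jmat :: "nat \<Rightarrow> cmat" where
  "Jmat n = (\<lambda>p q. if 1 \<le> p \<and> p \<le> n \<and> q = p + n then 1
                    else if n < p \<and> p \<le> 2*n \<and> q + n = p then -1 else 0)"
definition sp_set :: "nat \<Rightarrow> cmat set" where
  "sp_set n = {X. is_mat (2*n) X \<and>
      madd (mmul (2*n) (mtrans X) (Jmat n)) (mmul (2*n) (Jmat n) X) = mzero}"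
definition so_set :: "nat \<Rightarrow> cmat set" where
  "so_set N = {X. is_mat N X \<and> mtrans X = msmult (-1) X}"

inductive_set lie_gen :: "nat \<Rightarrow> cmat set \<Rightarrow> cmat set" for N S where
  gen: "X \<in> S \<Longrightarrow> X \<in> lie_gen N S"
| zero: "mzero \<in> lie_gen N S"
| add: "X \<in> lie_gen N S \<Longrightarrow> Y \<in> lie_gen N S \<Longrightarrow> madd X Y \<in> lie_gen N S"
| smult: "X \<in> lie_gen N S \<Longrightarrow> msmult c X \<in> lie_gen N S"
| brk: "X \<in> lie_gen N S \<Longrightarrow> Y \<in> lie_gen N S \<Longrightarrow> bracket N X Y \<in> lie_gen N S"

definition lie_iso :: "nat \<Rightarrow> cmat set \<Rightarrow> nat \<Rightarrow> cmat set \<Rightarrow> bool" where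
  "lie_iso N A M B \<longleftrightarrow> (\<exists>\<phi>. bij_betw \<phi> A B \<and>
     (\<forall>X\<in>A. \<forall>Y\<in>A. \<phi> (madd X Y) = madd (\<phi> X) (\<phi> Y)) \<and>
     (\<forall>c. \<forall>X\<in>A. \<phi> (msmult c X) = msmult c (\<phi> X)) \<and>
     (\<forall>X\<in>A. \<forall>Y\<in>A. \<phi> (bracket N X Y) = bracket M (\<phi> X) (\<phi> Y)))"

definition Mn :: "nat \<Rightarrow> nat \<Rightarrow> nat \<Rightarrow> int" where
  "Mn n i j = (if i = j then 2
               else if j = i + 1 \<or> i = j + 1 then -1
               else if (i = 1 \<and> j = n) \<or> (i = n \<and> j = 1) then 1 else 0)"

text \<open>By the universal property of a
  Lie algebra given by generators and relations, an assignment on generators extends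
  to a Lie algebra homomorphism gim(M_n) -> gl_N iff these relations hold.\<close>
definition gim_relations :: "nat \<Rightarrow> nat \<Rightarrow> (nat \<Rightarrow> cmat) \<Rightarrow> (nat \<Rightarrow> cmat) \<Rightarrow> (nat \<Rightarrow> cmat) \<Rightarrow> bool" where
  "gim_relations n N E F H \<longleftrightarrow>
    (\<forall>i\<in>{1..n}. \<forall>j\<in>{1..n}.
       bracket N (H i) (E j) = msmult (of_int (Mn n i j)) (E j) \<and>
       bracket N (H i) (F j) = msmult (- of_int (Mn n i j)) (F j)) \<and>
    (\<forall>i\<in>{1..n}. bracket N (E i) (F i) = H i) \<and>
    (\<forall>i\<in>{1..n}. \<forall>j\<in>{1..n}. i \<noteq> j \<and> Mn n i j \<le> 0 \<longrightarrow>
       bracket N (E i) (F j) = mzero \<and> bracket N (F i) (E j) = mzero \<and>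
       (bracket N (E i) ^^ nat (1 - Mn n i j)) (E j) = mzero \<and>
       (bracket N (F i) ^^ nat (1 - Mn n i j)) (F j) = mzero) \<and>
    (\<forall>i\<in>{1..n}. \<forall>j\<in>{1..n}. i \<noteq> j \<and> Mn n i j > 0 \<longrightarrow>
       bracket N (E i) (E j) = mzero \<and> bracket N (F i) (F j) = mzero \<and>
       (bracket N (E i) ^^ nat (Mn n i j + 1)) (F j) = mzero \<and>
       (bracket N (F i) ^^ nat (Mn n i j + 1)) (E j) = mzero)"

definition psiE :: "nat \<Rightarrow> complex \<Rightarrow> nat \<Rightarrow> cmat" where
  "psiE n a i = (if i < n then msub (munit i (i+1)) (munit (n+i+1) (n+i))
                 else madd (munit n (n+1)) (msmult (inverse a) (munit 1 (2*n))))"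
definition psiF :: "nat \<Rightarrow> complex \<Rightarrow> nat \<Rightarrow> cmat" where
  "psiF n a i = (if i < n then msub (munit (i+1) i) (munit (n+i) (n+i+1))
                 else madd (munit (n+1) n) (msmult a (munit (2*n) 1)))"
definition psiH :: "nat \<Rightarrow> complex \<Rightarrow> nat \<Rightarrow> cmat" where
  "psiH n a i = bracket (2*n) (psiE n a i) (psiF n a i)"

definition psi_image :: "nat \<Rightarrow> complex \<Rightarrow> cmat set" where
  "psi_image n a = lie_gen (2*n) (\<Union>i\<in>{1..n}. {psiE n a i, psiF n a i, psiH n a i})"

end

theory Submission
  imports Defs
begin


lemma mmul_munit: "mmul N (munit i j) (munit k l) =
   (if j = k \<and> 1 \<le> j \<and> j \<le> N then munit i l else mzero)"
  by (auto simp: mmul_def munit_def mzero_def fun_eq_iff if_distrib[where f="\<lambda>x. x * _"] sum.delta cong: if_cong)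

lemma mmul_madd1: "mmul N (madd A B) C = madd (mmul N A C) (mmul N B C)"
  by (simp add: mmul_def madd_def fun_eq_iff distrib_right sum.distrib)
lemma mmul_madd2: "mmul N C (madd A B) = madd (mmul N C A) (mmul N C B)"
  by (simp add: mmul_def madd_def fun_eq_iff distrib_left sum.distrib)
lemma mmul_msub1: "mmul N (msub A B) C = msub (mmul N A C) (mmul N B C)"
  by (simp add: mmul_def msub_def fun_eq_iff left_diff_distrib sum_subtractf)
lemma mmul_msub2: "mmul N C (msub A B) = msub (mmul N C A) (mmul N C B)"
  by (simp add: mmul_def msub_def fun_eq_iff right_diff_distrib sum_subtractf)
lemma mmul_msmult1: "mmul N (msmult c A) C = msmult c (mmul N A C)"
  by (simp add: mmul_def msmult_def fun_eq_iff sum_distrib_left mult.assoc)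
lemma mmul_msmult2: "mmul N C (msmult c A) = msmult c (mmul N C A)"
  by (simp add: mmul_def msmult_def fun_eq_iff sum_distrib_left mult.left_commute)
lemma mmul_mzero1: "mmul N mzero C = mzero"
  by (simp add: mmul_def mzero_def fun_eq_iff)
lemma mmul_mzero2: "mmul N C mzero = mzero"
  by (simp add: mmul_def mzero_def fun_eq_iff)

lemmas mmul_simps = mmul_munit mmul_madd1 mmul_madd2 mmul_msub1 mmul_msub2
  mmul_msmult1 mmul_msmult2 mmul_mzero1 mmul_mzero2

lemmas mat_defs = madd_def msub_def msmult_def munit_def mzero_def

definition Dm :: "nat \<Rightarrow> nat \<Rightarrow> nat \<Rightarrow> cmat" where
  "Dm n p q = msub (munit p q) (munit (n+q) (n+p))"
definition Km :: "nat \<Rightarrow> complex \<Rightarrow> nat \<Rightarrow> nat \<Rightarrow> cmat" where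
  "Km n b p r = madd (munit p (n+r)) (msmult b (munit r (n+p)))"
definition Kl :: "nat \<Rightarrow> complex \<Rightarrow> nat \<Rightarrow> nat \<Rightarrow> cmat" where
  "Kl n a r p = madd (munit (n+r) p) (msmult a (munit (n+p) r))"

lemma D_D: assumes "p \<noteq> r" "p \<in> {1..n}" "q \<in> {1..n}" "r \<in> {1..n}"
  shows "bracket (2*n) (Dm n p q) (Dm n q r) = Dm n p r"
  using assms by (simp add: bracket_def Dm_def mmul_simps) (auto simp: fun_eq_iff mat_defs)

lemma D_K: assumes "x \<noteq> y" "x \<in> {1..n}" "y \<in> {1..n}" "p \<in> {1..n}" "r \<in> {1..n}"
  shows "bracket (2*n) (Dm n x y) (Km n b p r) =
     madd (if y = p then Km n b x r else mzero) (if y = r then Km n b p x else mzero)"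
  using assms by (simp add: bracket_def Dm_def Km_def mmul_simps) (auto simp: fun_eq_iff mat_defs)

lemma D_Kl: assumes "x \<noteq> y" "x \<in> {1..n}" "y \<in> {1..n}" "p \<in> {1..n}" "r \<in> {1..n}"
  shows "bracket (2*n) (Dm n x y) (Kl n b r p) =
     msmult (-1) (madd (if x = r then Kl n b y p else mzero) (if x = p then Kl n b r y else mzero))"
  using assms by (simp add: bracket_def Dm_def Kl_def mmul_simps) (auto simp: fun_eq_iff mat_defs)

lemma D_D_diag: assumes "p \<noteq> q" "p \<in> {1..n}" "q \<in> {1..n}"
  shows "bracket (2*n) (Dm n p q) (Dm n q p) = msub (Dm n p p) (Dm n q q)"
  using assms by (simp add: bracket_def Dm_def mmul_simps) (auto simp: fun_eq_iff mat_defs)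


lemma lg_sub: "X \<in> lie_gen N S \<Longrightarrow> Y \<in> lie_gen N S \<Longrightarrow> msub X Y \<in> lie_gen N S"
proof -
  assume "X \<in> lie_gen N S" "Y \<in> lie_gen N S"
  hence "madd X (msmult (-1) Y) \<in> lie_gen N S" by (intro lie_gen.add lie_gen.smult)
  moreover have "madd X (msmult (-1) Y) = msub X Y" by (simp add: mat_defs fun_eq_iff)
  ultimately show ?thesis by simp
qed

lemma lg_if: "(P \<Longrightarrow> X \<in> lie_gen N S) \<Longrightarrow> (if P then X else mzero) \<in> lie_gen N S"
  by (auto intro: lie_gen.zero)

lemma lg_sum: assumes "finite K" "\<And>k. k \<in> K \<Longrightarrow> F k \<in> lie_gen N S"
  shows "(\<lambda>p q. \<Sum>k\<in>K. F k p q) \<in> lie_gen N S"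
  using assms
proof (induction K rule: finite_induct)
  case empty
  then show ?case using lie_gen.zero[of N S] by (simp add: mzero_def)
next
  case (insert x F')
  have "madd (F x) (\<lambda>p q. \<Sum>k\<in>F'. F k p q) \<in> lie_gen N S"
    using insert by (intro lie_gen.add) auto
  then show ?case using insert by (simp add: madd_def)
qed

lemma lg_cancel: "madd X Y \<in> lie_gen N S \<Longrightarrow> X \<in> lie_gen N S \<Longrightarrow> Y \<in> lie_gen N S"
  using lg_sub[of "madd X Y" N S X] by (simp add: mat_defs)

lemma lg_cancel2: "madd X Y \<in> lie_gen N S \<Longrightarrow> Y \<in> lie_gen N S \<Longrightarrow> X \<in> lie_gen N S"
  using lg_sub[of "madd X Y" N S Y] by (simp add: mat_defs)

lemma lg_unscale: "msmult c X \<in> lie_gen N S \<Longrightarrow> c \<noteq> 0 \<Longrightarrow> X \<in> lie_gen N S"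
  using lie_gen.smult[of "msmult c X" N S "inverse c"] by (simp add: msmult_def mult.assoc[symmetric])

lemma lg_madd_zero: "madd X mzero = X" "madd mzero X = X"
  by (simp_all add: mat_defs)

context
  fixes n :: nat and a :: complex
  assumes n3: "n \<ge> 3" and a0: "a \<noteq> 0"
begin

abbreviation "LL \<equiv> psi_image n a"

lemma gen_in: "i \<in> {1..n} \<Longrightarrow> psiE n a i \<in> LL" "i \<in> {1..n} \<Longrightarrow> psiF n a i \<in> LL"
  "i \<in> {1..n} \<Longrightarrow> psiH n a i \<in> LL"
  unfolding psi_image_def by (rule lie_gen.gen, blast)+

lemma LL_brk: "X \<in> LL \<Longrightarrow> Y \<in> LL \<Longrightarrow> bracket (2*n) X Y \<in> LL"
  unfolding psi_image_def by (rule lie_gen.brk)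

lemma e_D: "1 \<le> i \<Longrightarrow> i < n \<Longrightarrow> Dm n i (i+1) \<in> LL"
  using gen_in(1)[of i] by (simp add: psiE_def Dm_def add.commute add.left_commute)
lemma f_D: "1 \<le> i \<Longrightarrow> i < n \<Longrightarrow> Dm n (i+1) i \<in> LL"
  using gen_in(2)[of i] by (simp add: psiF_def Dm_def add.commute add.left_commute)

lemma D_up: "1 \<le> p \<Longrightarrow> p + Suc d \<le> n \<Longrightarrow> Dm n p (p + Suc d) \<in> LL \<and> Dm n (p + Suc d) p \<in> LL"
proof (induction d)
  case 0
  then show ?case using e_D[of p] f_D[of p] by simp
next
  case (Suc d)
  let ?q = "p + Suc d"
  have IH: "Dm n p ?q \<in> LL" "Dm n ?q p \<in> LL" using Suc by auto
  have 1: "Dm n ?q (?q+1) \<in> LL" "Dm n (?q+1) ?q \<in> LL" using Suc e_D[of ?q] f_D[of ?q] by auto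
  have "bracket (2*n) (Dm n p ?q) (Dm n ?q (?q+1)) = Dm n p (?q+1)"
    using Suc by (intro D_D) auto
  moreover have "bracket (2*n) (Dm n (?q+1) ?q) (Dm n ?q p) = Dm n (?q+1) p"
    using Suc by (intro D_D) auto
  ultimately have "Dm n p (?q+1) \<in> LL \<and> Dm n (?q+1) p \<in> LL"
    using IH 1 LL_brk[of "Dm n p ?q" "Dm n ?q (?q+1)"] LL_brk[of "Dm n (?q+1) ?q" "Dm n ?q p"] by simp
  moreover have "?q + 1 = p + Suc (Suc d)" by simp
  ultimately show ?case by simp
qed

lemma D_in: assumes h: "p \<in> {1..n}" "q \<in> {1..n}" "p \<noteq> q" shows "Dm n p q \<in> LL"
proof (cases "p < q")
  case True
  then obtain d where "q = Suc (p + d)" using less_imp_Suc_add by blast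
  then have d: "q = p + Suc d" by simp
  have "1 \<le> p" "p + Suc d \<le> n" using h d by auto
  from D_up[OF this] show ?thesis unfolding d by blast
next
  case False
  then have "q < p" using h(3) by simp
  then obtain d where "p = Suc (q + d)" using less_imp_Suc_add by blast
  then have d: "p = q + Suc d" by simp
  have "1 \<le> q" "q + Suc d \<le> n" using h d by auto
  from D_up[OF this] show ?thesis unfolding d by blast
qed

end


context
  fixes n :: nat and a :: complex
  assumes n3: "n \<ge> 3" and a0: "a \<noteq> 0"
begin

lemma en_K: "psiE n a n = Km n (inverse a) n 1"
  by (simp add: psiE_def Km_def mult_2)
lemma fn_Kl: "psiF n a n = Kl n a 1 n"
  by (simp add: psiF_def Kl_def mult_2)

lemma LL_smult: "X \<in> psi_image n a \<Longrightarrow> msmult c X \<in> psi_image n a"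
  unfolding psi_image_def by (rule lie_gen.smult)

lemma K_x1: assumes "x \<in> {1..n}" shows "Km n (inverse a) x 1 \<in> psi_image n a"
proof (cases "x = n")
  case True
  then show ?thesis using gen_in(1)[OF n3 a0, of n] n3 en_K by auto
next
  case False
  have "bracket (2*n) (Dm n x n) (Km n (inverse a) n 1) = Km n (inverse a) x 1"
    using D_K[of x n n n 1 "inverse a"] False assms n3 by (simp add: lg_madd_zero)
  moreover have "Dm n x n \<in> psi_image n a" using D_in[OF n3 a0, of x n] False assms n3 by auto
  moreover have "Km n (inverse a) n 1 \<in> psi_image n a" using gen_in(1)[OF n3 a0, of n] n3 en_K by auto
  ultimately show ?thesis using LL_brk[OF n3 a0, of "Dm n x n" "Km n (inverse a) n 1"] by simp
qed

lemma K_in: assumes "x \<in> {1..n}" "r \<in> {1..n}" shows "Km n (inverse a) x r \<in> psi_image n a"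
proof (cases "r = 1")
  case True
  then show ?thesis using K_x1 assms by simp
next
  case False
  have D: "Dm n r 1 \<in> psi_image n a" using D_in[OF n3 a0, of r 1] False assms n3 by auto
  show ?thesis
  proof (cases "x = 1")
    case True
    have "bracket (2*n) (Dm n r 1) (Km n (inverse a) x 1) = madd (Km n (inverse a) r 1) (Km n (inverse a) x r)"
      using D_K[of r 1 n x 1 "inverse a"] False assms True by simp
    then have "madd (Km n (inverse a) r 1) (Km n (inverse a) x r) \<in> psi_image n a"
      using LL_brk[OF n3 a0 D K_x1[of x]] assms by simp
    then show ?thesis using K_x1[of r] assms lg_cancel[of _ _ "2*n"] unfolding psi_image_def by blast
  next
    case False
    have "bracket (2*n) (Dm n r 1) (Km n (inverse a) x 1) = Km n (inverse a) x r"
      using D_K[of r 1 n x 1 "inverse a"] \<open>r \<noteq> 1\<close> assms False by (simp add: lg_madd_zero)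
    then show ?thesis using LL_brk[OF n3 a0 D K_x1[of x]] assms by simp
  qed
qed

lemma Kl_1y: assumes "y \<in> {1..n}" shows "Kl n a 1 y \<in> psi_image n a"
proof (cases "y = n")
  case True
  then show ?thesis using gen_in(2)[OF n3 a0, of n] n3 fn_Kl by auto
next
  case False
  have "bracket (2*n) (Dm n n y) (Kl n a 1 n) = msmult (-1) (Kl n a 1 y)"
    using D_Kl[of n y n n 1 a] False assms n3 by (simp add: lg_madd_zero)
  moreover have "Dm n n y \<in> psi_image n a" using D_in[OF n3 a0, of n y] False assms n3 by auto
  moreover have "Kl n a 1 n \<in> psi_image n a" using gen_in(2)[OF n3 a0, of n] n3 fn_Kl by auto
  ultimately have "msmult (-1) (Kl n a 1 y) \<in> psi_image n a" using LL_brk[OF n3 a0, of "Dm n n y" "Kl n a 1 n"] by simp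
  then show ?thesis unfolding psi_image_def by (rule lg_unscale) simp
qed

lemma Kl_11: "Kl n a 1 1 \<in> psi_image n a"
proof -
  have "bracket (2*n) (Dm n 2 1) (Kl n a 1 2) = msmult (-1) (Kl n a 1 1)"
    using D_Kl[of 2 1 n 2 1 a] n3 by (simp add: lg_madd_zero)
  moreover have "Dm n 2 1 \<in> psi_image n a" using D_in[OF n3 a0, of 2 1] n3 by auto
  moreover have "Kl n a 1 2 \<in> psi_image n a" using Kl_1y[of 2] n3 by auto
  ultimately have "msmult (-1) (Kl n a 1 1) \<in> psi_image n a" using LL_brk[OF n3 a0, of "Dm n 2 1" "Kl n a 1 2"] by simp
  then show ?thesis unfolding psi_image_def by (rule lg_unscale) simp
qed

lemma Kl_in: assumes "y \<in> {1..n}" "p \<in> {1..n}" shows "Kl n a y p \<in> psi_image n a"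
proof (cases "y = 1")
  case True
  then show ?thesis using Kl_1y assms by simp
next
  case False
  have D: "Dm n 1 y \<in> psi_image n a" using D_in[OF n3 a0, of 1 y] False assms n3 by auto
  show ?thesis
  proof (cases "p = 1")
    case True
    have "bracket (2*n) (Dm n 1 y) (Kl n a 1 1) = msmult (-1) (madd (Kl n a y 1) (Kl n a 1 y))"
      using D_Kl[of 1 y n 1 1 a] False assms True by simp
    then have "msmult (-1) (madd (Kl n a y 1) (Kl n a 1 y)) \<in> psi_image n a"
      using LL_brk[OF n3 a0 D Kl_11] by simp
    then have "madd (Kl n a y 1) (Kl n a 1 y) \<in> psi_image n a"
      unfolding psi_image_def by (rule lg_unscale) simp
    then show ?thesis using Kl_1y[of y] assms True lg_cancel2[of _ _ "2*n"] unfolding psi_image_def by blast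
  next
    case False
    have "bracket (2*n) (Dm n 1 y) (Kl n a 1 p) = msmult (-1) (Kl n a y p)"
      using D_Kl[of 1 y n p 1 a] \<open>y \<noteq> 1\<close> assms False by (simp add: lg_madd_zero)
    then have "msmult (-1) (Kl n a y p) \<in> psi_image n a" using LL_brk[OF n3 a0 D Kl_1y[of p]] assms by simp
    then show ?thesis unfolding psi_image_def by (rule lg_unscale) simp
  qed
qed

end


definition dg :: "nat \<Rightarrow> (nat \<Rightarrow> complex) \<Rightarrow> cmat" where
  "dg N d = (\<lambda>p q. if p = q \<and> 1 \<le> p \<and> p \<le> N then d p else 0)"

lemma dg_munit: "p \<in> {1..N} \<Longrightarrow> q \<in> {1..N} \<Longrightarrow>
  bracket N (dg N d) (munit p q) = msmult (d p - d q) (munit p q)"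
  by (auto simp: bracket_def mmul_def dg_def fun_eq_iff mat_defs if_distrib[where f="\<lambda>x. x * _"]
        if_distrib[where f="\<lambda>x. _ * x"] sum.delta cong: if_cong)

lemma bracket_simps:
  "bracket N X (madd A B) = madd (bracket N X A) (bracket N X B)"
  "bracket N X (msub A B) = msub (bracket N X A) (bracket N X B)"
  "bracket N X (msmult c A) = msmult c (bracket N X A)"
  "bracket N (madd A B) X = madd (bracket N A X) (bracket N B X)"
  "bracket N (msub A B) X = msub (bracket N A X) (bracket N B X)"
  "bracket N (msmult c A) X = msmult c (bracket N A X)"
  by (simp_all add: bracket_def mmul_simps) (simp_all add: fun_eq_iff mat_defs algebra_simps)

definition hdg :: "nat \<Rightarrow> nat \<Rightarrow> nat \<Rightarrow> complex" where
  "hdg n i p = (if i < n then (if p = i then 1 else 0) - (if p = i+1 then 1 else 0)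
                   - (if p = n+i then 1 else 0) + (if p = n+i+1 then 1 else 0)
               else (if p = 1 then 1 else 0) + (if p = n then 1 else 0)
                   - (if p = n+1 then 1 else 0) - (if p = n+n then 1 else 0))"

context
  fixes n :: nat and a :: complex
  assumes n3: "n \<ge> 3" and a0: "a \<noteq> 0"
begin

lemma psiH_dg: assumes "i \<in> {1..n}" shows "psiH n a i = dg (2*n) (hdg n i)"
proof (cases "i < n")
  case True
  then show ?thesis using assms
    by (simp add: psiH_def psiE_def psiF_def bracket_def mmul_simps)
       (auto simp: fun_eq_iff mat_defs dg_def hdg_def)
next
  case False
  then have i: "i = n" using assms by auto
  show ?thesis using n3 a0 unfolding i
    by (simp add: psiH_def psiE_def psiF_def bracket_def mmul_simps)
       (auto simp: fun_eq_iff mat_defs dg_def hdg_def)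
qed

end


lemma msmult_simps: "msmult c (msub A B) = msub (msmult c A) (msmult c B)"
  "msmult c (madd A B) = madd (msmult c A) (msmult c B)"
  "msmult c (msmult d A) = msmult (c*d) A"
  by (simp_all add: mat_defs fun_eq_iff algebra_simps)

context
  fixes n :: nat and a :: complex
  assumes n3: "n \<ge> 3" and a0: "a \<noteq> 0"
begin

lemma c1: assumes "i \<in> {1..n}" "j \<in> {1..n}" "j < n"
  shows "hdg n i j - hdg n i (j+1) = of_int (Mn n i j)"
  using assms n3 by (auto simp: hdg_def Mn_def)

lemma c2: assumes "i \<in> {1..n}" "j \<in> {1..n}" "j < n"
  shows "hdg n i (n+j+1) - hdg n i (n+j) = of_int (Mn n i j)"
  using assms n3 by (auto simp: hdg_def Mn_def)

lemma c3: assumes "i \<in> {1..n}"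
  shows "hdg n i n - hdg n i (n+1) = of_int (Mn n i n)"
  using assms n3 by (auto simp: hdg_def Mn_def)

lemma c4: assumes "i \<in> {1..n}"
  shows "hdg n i 1 - hdg n i (n+n) = of_int (Mn n i n)"
  using assms n3 by (auto simp: hdg_def Mn_def)

lemma R1E: assumes "i \<in> {1..n}" "j \<in> {1..n}"
  shows "bracket (2*n) (psiH n a i) (psiE n a j) = msmult (of_int (Mn n i j)) (psiE n a j)"
proof (cases "j < n")
  case True
  have "bracket (2*n) (psiH n a i) (psiE n a j) =
     msub (msmult (hdg n i j - hdg n i (j+1)) (munit j (j+1)))
          (msmult (hdg n i (n+j+1) - hdg n i (n+j)) (munit (n+j+1) (n+j)))"
    using assms True by (simp add: psiH_dg[OF n3 a0 assms(1)] psiE_def bracket_simps dg_munit)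
  then show ?thesis using c1[OF assms True] c2[OF assms True] True
    by (simp add: psiE_def msmult_simps)
next
  case False
  then have j: "j = n" using assms by auto
  have "bracket (2*n) (psiH n a i) (psiE n a j) =
     madd (msmult (hdg n i n - hdg n i (n+1)) (munit n (n+1)))
          (msmult (inverse a) (msmult (hdg n i 1 - hdg n i (n+n)) (munit 1 (2*n))))"
    using assms n3 unfolding j by (simp add: psiH_dg[OF n3 a0 assms(1)] psiE_def bracket_simps dg_munit mult_2)
  then show ?thesis using c3[OF assms(1)] c4[OF assms(1)] j
    by (simp add: psiE_def msmult_simps mult.commute)
qed

lemma R1F: assumes "i \<in> {1..n}" "j \<in> {1..n}"
  shows "bracket (2*n) (psiH n a i) (psiF n a j) = msmult (- of_int (Mn n i j)) (psiF n a j)"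
proof (cases "j < n")
  case True
  have "bracket (2*n) (psiH n a i) (psiF n a j) =
     msub (msmult (hdg n i (j+1) - hdg n i j) (munit (j+1) j))
          (msmult (hdg n i (n+j) - hdg n i (n+j+1)) (munit (n+j) (n+j+1)))"
    using assms True by (simp add: psiH_dg[OF n3 a0 assms(1)] psiF_def bracket_simps dg_munit)
  moreover have "hdg n i (j+1) - hdg n i j = - of_int (Mn n i j)" "hdg n i (n+j) - hdg n i (n+j+1) = - of_int (Mn n i j)"
    using c1[OF assms True] c2[OF assms True] by (simp_all add: algebra_simps)
  ultimately show ?thesis using True
    by (simp add: psiF_def msmult_simps)
next
  case False
  then have j: "j = n" using assms by auto
  have "bracket (2*n) (psiH n a i) (psiF n a j) =
     madd (msmult (hdg n i (n+1) - hdg n i n) (munit (n+1) n))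
          (msmult a (msmult (hdg n i (n+n) - hdg n i 1) (munit (2*n) 1)))"
    using assms n3 unfolding j by (simp add: psiH_dg[OF n3 a0 assms(1)] psiF_def bracket_simps dg_munit mult_2)
  moreover have "hdg n i (n+1) - hdg n i n = - of_int (Mn n i n)" "hdg n i (n+n) - hdg n i 1 = - of_int (Mn n i n)"
    using c3[OF assms(1)] c4[OF assms(1)] by (simp_all add: algebra_simps)
  ultimately show ?thesis using j
    by (simp add: psiF_def msmult_simps mult.commute)
qed

end


lemma mmul_if: "mmul N (if c then A else B) C = (if c then mmul N A C else mmul N B C)"
  "mmul N C (if c then A else B) = (if c then mmul N C A else mmul N C B)"
  by auto

lemmas zsimps = psiE_def psiF_def bracket_def mmul_simps mmul_if



context
  fixes n :: nat and a :: complex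
  assumes n3: "n \<ge> 3" and a0: "a \<noteq> 0"
begin

lemma A1: "i \<in> {1..n} \<Longrightarrow> j \<in> {1..n} \<Longrightarrow> i < n \<Longrightarrow> j < n \<Longrightarrow> i \<noteq> j \<Longrightarrow>
  bracket (2*n) (psiE n a i) (psiF n a j) = mzero \<and> bracket (2*n) (psiF n a i) (psiE n a j) = mzero"
  by (simp add: zsimps; auto simp: fun_eq_iff mat_defs)

lemma A2: "i \<in> {1..n} \<Longrightarrow> i + 1 < n \<Longrightarrow>
  bracket (2*n) (psiE n a i) (bracket (2*n) (psiE n a i) (psiE n a (i+1))) = mzero \<and>
  bracket (2*n) (psiF n a i) (bracket (2*n) (psiF n a i) (psiF n a (i+1))) = mzero \<and>
  bracket (2*n) (psiE n a (i+1)) (bracket (2*n) (psiE n a (i+1)) (psiE n a i)) = mzero \<and>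
  bracket (2*n) (psiF n a (i+1)) (bracket (2*n) (psiF n a (i+1)) (psiF n a i)) = mzero"
  by (simp add: zsimps; auto simp: fun_eq_iff mat_defs)

lemma A3: "1 \<le> i \<Longrightarrow> i + 1 < j \<Longrightarrow> j < n \<Longrightarrow>
  bracket (2*n) (psiE n a i) (psiE n a j) = mzero \<and> bracket (2*n) (psiF n a i) (psiF n a j) = mzero \<and> bracket (2*n) (psiE n a j) (psiE n a i) = mzero \<and> bracket (2*n) (psiF n a j) (psiF n a i) = mzero"
  by (simp add: zsimps; auto simp: fun_eq_iff mat_defs)

lemma B1: "1 < i \<Longrightarrow> i < n \<Longrightarrow>
  bracket (2*n) (psiE n a i) (psiF n a n) = mzero \<and> bracket (2*n) (psiF n a i) (psiE n a n) = mzero \<and> bracket (2*n) (psiE n a n) (psiF n a i) = mzero \<and> bracket (2*n) (psiF n a n) (psiE n a i) = mzero"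
  using n3 by (simp add: zsimps; auto simp: fun_eq_iff mat_defs)

lemma B2: "1 \<le> i \<Longrightarrow> i + 1 = n \<Longrightarrow>
  bracket (2*n) (psiE n a i) (bracket (2*n) (psiE n a i) (psiE n a n)) = mzero \<and> bracket (2*n) (psiF n a i) (bracket (2*n) (psiF n a i) (psiF n a n)) = mzero \<and> bracket (2*n) (psiE n a n) (bracket (2*n) (psiE n a n) (psiE n a i)) = mzero \<and> bracket (2*n) (psiF n a n) (bracket (2*n) (psiF n a n) (psiF n a i)) = mzero"
  using n3 by (simp add: zsimps; auto simp: fun_eq_iff mat_defs)

lemma B3: "1 < i \<Longrightarrow> i + 1 < n \<Longrightarrow>
  bracket (2*n) (psiE n a i) (psiE n a n) = mzero \<and> bracket (2*n) (psiF n a i) (psiF n a n) = mzero \<and> bracket (2*n) (psiE n a n) (psiE n a i) = mzero \<and> bracket (2*n) (psiF n a n) (psiF n a i) = mzero"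
  using n3 by (simp add: zsimps; auto simp: fun_eq_iff mat_defs)

lemma B4: "bracket (2*n) (psiE n a 1) (psiE n a n) = mzero \<and> bracket (2*n) (psiF n a 1) (psiF n a n) = mzero \<and> bracket (2*n) (psiE n a n) (psiE n a 1) = mzero \<and> bracket (2*n) (psiF n a n) (psiF n a 1) = mzero \<and> bracket (2*n) (psiE n a 1) (bracket (2*n) (psiE n a 1) (psiF n a n)) = mzero \<and> bracket (2*n) (psiF n a 1) (bracket (2*n) (psiF n a 1) (psiE n a n)) = mzero \<and> bracket (2*n) (psiE n a n) (bracket (2*n) (psiE n a n) (psiF n a 1)) = mzero \<and> bracket (2*n) (psiF n a n) (bracket (2*n) (psiF n a n) (psiE n a 1)) = mzero"
  using n3 by (simp add: zsimps; auto simp: fun_eq_iff mat_defs)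

end


context
  fixes n :: nat and a :: complex
  assumes n3: "n \<ge> 3" and a0: "a \<noteq> 0"
begin

lemma part_ef: assumes "i \<in> {1..n}" "j \<in> {1..n}" "i \<noteq> j" "Mn n i j \<le> 0"
  shows "bracket (2*n) (psiE n a i) (psiF n a j) = mzero \<and> bracket (2*n) (psiF n a i) (psiE n a j) = mzero"
proof -
  have not1n: "\<not> (i = 1 \<and> j = n) \<and> \<not> (i = n \<and> j = 1)" using assms n3 by (auto simp: Mn_def)
  consider "i < n" "j < n" | "i < n" "j = n" | "i = n" "j < n" using assms by force
  then show ?thesis
  proof cases
    case 1 then show ?thesis using A1[OF n3 a0] assms by blast
  next
    case 2 then show ?thesis using B1[OF n3 a0, of i] assms not1n by auto
  next
    case 3 then show ?thesis using B1[OF n3 a0, of j] assms not1n by auto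
  qed
qed

lemma part_serre: assumes "i \<in> {1..n}" "j \<in> {1..n}" "i \<noteq> j" "Mn n i j \<le> 0"
  shows "(bracket (2*n) (psiE n a i) ^^ nat (1 - Mn n i j)) (psiE n a j) = mzero \<and>
         (bracket (2*n) (psiF n a i) ^^ nat (1 - Mn n i j)) (psiF n a j) = mzero"
proof (cases "j = i + 1 \<or> i = j + 1")
  case True
  then have M: "Mn n i j = -1" using assms by (auto simp: Mn_def)
  have "bracket (2*n) (psiE n a i) (bracket (2*n) (psiE n a i) (psiE n a j)) = mzero \<and>
        bracket (2*n) (psiF n a i) (bracket (2*n) (psiF n a i) (psiF n a j)) = mzero"
  proof -
    consider "j = i + 1" "j < n" | "j = i + 1" "j = n" | "i = j + 1" "i < n" | "i = j + 1" "i = n"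
      using True assms by force
    then show ?thesis
    proof cases
      case 1 then show ?thesis using A2[OF n3 a0, of i] assms by auto
    next
      case 2 then show ?thesis using B2[OF n3 a0, of i] assms by auto
    next
      case 3 then show ?thesis using A2[OF n3 a0, of j] assms by auto
    next
      case 4 then show ?thesis using B2[OF n3 a0, of j] assms by auto
    qed
  qed
  then show ?thesis using M by (simp add: numeral_2_eq_2)
next
  case False
  have not1n: "\<not> (i = 1 \<and> j = n) \<and> \<not> (i = n \<and> j = 1)" using assms n3 by (auto simp: Mn_def)
  then have M: "Mn n i j = 0" using assms False by (auto simp: Mn_def)
  have "bracket (2*n) (psiE n a i) (psiE n a j) = mzero \<and>
        bracket (2*n) (psiF n a i) (psiF n a j) = mzero"
  proof -
    consider "i < j" "j < n" | "j < i" "i < n" | "i < n" "j = n" | "i = n" "j < n"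
      using assms by force
    then show ?thesis
    proof cases
      case 1 then show ?thesis using A3[OF n3 a0, of i j] assms False by auto
    next
      case 2 then show ?thesis using A3[OF n3 a0, of j i] assms False by auto
    next
      case 3 then show ?thesis using B3[OF n3 a0, of i] assms False not1n by auto
    next
      case 4 then show ?thesis using B3[OF n3 a0, of j] assms False not1n by auto
    qed
  qed
  then show ?thesis using M by simp
qed

lemma part_pos: assumes "i \<in> {1..n}" "j \<in> {1..n}" "i \<noteq> j" "Mn n i j > 0"
  shows "bracket (2*n) (psiE n a i) (psiE n a j) = mzero \<and> bracket (2*n) (psiF n a i) (psiF n a j) = mzero \<and>
       (bracket (2*n) (psiE n a i) ^^ nat (Mn n i j + 1)) (psiF n a j) = mzero \<and>
       (bracket (2*n) (psiF n a i) ^^ nat (Mn n i j + 1)) (psiE n a j) = mzero"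
proof -
  have c: "(i = 1 \<and> j = n) \<or> (i = n \<and> j = 1)" and M: "Mn n i j = 1"
    using assms n3 by (auto simp: Mn_def split: if_splits)
  show ?thesis using c B4[OF n3 a0] M by (auto simp: numeral_2_eq_2)
qed

lemma relations: "gim_relations n (2*n) (psiE n a) (psiF n a) (psiH n a)"
  unfolding gim_relations_def
  using R1E[OF n3 a0] R1F[OF n3 a0] part_ef part_serre part_pos
  by (auto simp: psiH_def)

end


lemma is_mat_munit: "i \<in> {1..N} \<Longrightarrow> j \<in> {1..N} \<Longrightarrow> is_mat N (munit i j)"
  by (auto simp: is_mat_def munit_def)
lemma is_mat_ops: "is_mat N mzero" "is_mat N A \<Longrightarrow> is_mat N B \<Longrightarrow> is_mat N (madd A B)"
  "is_mat N A \<Longrightarrow> is_mat N B \<Longrightarrow> is_mat N (msub A B)" "is_mat N A \<Longrightarrow> is_mat N (msmult c A)"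
  "is_mat N A \<Longrightarrow> is_mat N B \<Longrightarrow> is_mat N (mmul N A B)"
  "is_mat N A \<Longrightarrow> is_mat N B \<Longrightarrow> is_mat N (bracket N A B)"
  by (auto simp: is_mat_def mat_defs mmul_def bracket_def)

lemma mtrace_ops: "mtrace N mzero = 0" "mtrace N (madd A B) = mtrace N A + mtrace N B"
  "mtrace N (msub A B) = mtrace N A - mtrace N B" "mtrace N (msmult c A) = c * mtrace N A"
  by (simp_all add: mtrace_def mat_defs sum.distrib sum_subtractf sum_distrib_left)

lemma mtrace_munit: "mtrace N (munit i j) = (if i = j \<and> i \<in> {1..N} then 1 else 0)"
proof (cases "i = j")
  case False
  then have "\<And>k. (if k = i \<and> k = j then 1 else 0) = (0::complex)" by auto
  then show ?thesis using False by (simp add: mtrace_def munit_def)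
qed (simp add: mtrace_def munit_def)

lemma mtrace_comm: "mtrace N (mmul N A B) = mtrace N (mmul N B A)"
  unfolding mtrace_def mmul_def
  by (subst sum.swap) (simp add: mult.commute)

lemma mtrace_bracket: "mtrace N (bracket N A B) = 0"
  by (simp add: bracket_def mtrace_ops mtrace_comm)

context
  fixes n :: nat and a :: complex
  assumes n3: "n \<ge> 3" and a0: "a \<noteq> 0"
begin

lemma gens_sl: assumes "i \<in> {1..n}"
  shows "psiE n a i \<in> sl_set (2*n)" "psiF n a i \<in> sl_set (2*n)" "psiH n a i \<in> sl_set (2*n)"
proof -
  show e: "psiE n a i \<in> sl_set (2*n)"
    using assms n3 by (auto simp: sl_set_def psiE_def mtrace_ops mtrace_munit intro!: is_mat_ops is_mat_munit)
  show f: "psiF n a i \<in> sl_set (2*n)"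
    using assms n3 by (auto simp: sl_set_def psiF_def mtrace_ops mtrace_munit intro!: is_mat_ops is_mat_munit)
  show "psiH n a i \<in> sl_set (2*n)"
    using e f by (auto simp: sl_set_def psiH_def mtrace_bracket intro!: is_mat_ops)
qed

lemma image_sl: "psi_image n a \<subseteq> sl_set (2*n)"
proof
  fix X assume "X \<in> psi_image n a"
  then show "X \<in> sl_set (2*n)" unfolding psi_image_def
  proof (induction rule: lie_gen.induct)
    case (gen X) then show ?case using gens_sl by auto
  next
    case zero then show ?case by (simp add: sl_set_def is_mat_ops mtrace_ops)
  next
    case (add X Y) then show ?case by (simp add: sl_set_def is_mat_ops mtrace_ops)
  next
    case (smult X c) then show ?case by (simp add: sl_set_def is_mat_ops mtrace_ops)
  next
    case (brk X Y) then show ?case by (simp add: sl_set_def is_mat_ops mtrace_bracket)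
  qed
qed

end


lemma bracket_units: "i \<noteq> k \<Longrightarrow> j \<in> {1..N} \<Longrightarrow> bracket N (munit i j) (munit j k) = munit i k"
  by (simp add: bracket_def mmul_simps) (auto simp: fun_eq_iff mat_defs)

lemma bracket_units_diag: "i \<noteq> j \<Longrightarrow> i \<in> {1..N} \<Longrightarrow> j \<in> {1..N} \<Longrightarrow>
  bracket N (munit i j) (munit j i) = msub (munit i i) (munit j j)"
  by (simp add: bracket_def mmul_simps)

lemma sum_units: "(\<Sum>p\<in>{1..N}. \<Sum>q\<in>{1..N}. X p q * munit p q i j) =
   (if i \<in> {1..N} \<and> j \<in> {1..N} then X i j else 0)"
proof -
  have inner: "(\<Sum>q\<in>{1..N}. X p q * munit p q i j) = (if p = i then (if j \<in> {1..N} then X p j else 0) else 0)" for p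
  proof -
    have "X p q * munit p q i j = (if q = j then (if p = i then X p q else 0) else 0)" for q
      by (auto simp: munit_def)
    then show ?thesis by (simp add: sum.delta')
  qed
  show ?thesis unfolding inner by (simp add: sum.delta)
qed

lemma sl_in_gen: assumes N: "N \<ge> 1"
  and U: "\<And>p q. p \<in> {1..N} \<Longrightarrow> q \<in> {1..N} \<Longrightarrow> p \<noteq> q \<Longrightarrow> munit p q \<in> lie_gen N S"
  shows "sl_set N \<subseteq> lie_gen N S"
proof
  fix X assume X: "X \<in> sl_set N"
  define G where "G p q = (if p = q then msmult (X p p) (msub (munit p p) (munit 1 1))
                         else msmult (X p q) (munit p q))" for p q
  have G: "G p q \<in> lie_gen N S" if "p \<in> {1..N}" "q \<in> {1..N}" for p q
  proof (cases "p = q")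
    case True
    show ?thesis
    proof (cases "p = 1")
      case True
      then have "msub (munit p p) (munit 1 1) = mzero" by (simp add: mat_defs fun_eq_iff)
      then show ?thesis using \<open>p = q\<close> by (simp add: G_def lie_gen.zero lie_gen.smult)
    next
      case False
      have "msub (munit p p) (munit 1 1) \<in> lie_gen N S"
        using bracket_units_diag[OF False that(1)] N U[OF that(1), of 1] U[of 1 p] False that
        lie_gen.brk[of "munit p 1" N S "munit 1 p"] by auto
      then show ?thesis using \<open>p = q\<close> by (simp add: G_def lie_gen.smult)
    qed
  next
    case False
    then show ?thesis using U that by (simp add: G_def lie_gen.smult)
  qed
  have "(\<lambda>i j. \<Sum>p\<in>{1..N}. (\<lambda>i j. \<Sum>q\<in>{1..N}. G p q i j) i j) \<in> lie_gen N S"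
    by (intro lg_sum) (auto intro: G)
  moreover have "(\<lambda>i j. \<Sum>p\<in>{1..N}. (\<lambda>i j. \<Sum>q\<in>{1..N}. G p q i j) i j) = X"
  proof (intro ext)
    fix i j
    have g: "G p q i j = X p q * munit p q i j - (if p = q then X p p * munit 1 1 i j else 0)" for p q
      by (auto simp: G_def mat_defs algebra_simps)
    have tr: "(\<Sum>p\<in>{1..N}. X p p) = 0" using X by (simp add: sl_set_def mtrace_def)
    have "(\<Sum>p\<in>{1..N}. \<Sum>q\<in>{1..N}. G p q i j) =
      (\<Sum>p\<in>{1..N}. \<Sum>q\<in>{1..N}. X p q * munit p q i j) -
      (\<Sum>p\<in>{1..N}. \<Sum>q\<in>{1..N}. (if p = q then X p p * munit 1 1 i j else 0))"
      by (simp add: g sum_subtractf)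
    also have "(\<Sum>p\<in>{1..N}. \<Sum>q\<in>{1..N}. (if p = q then X p p * munit 1 1 i j else 0)) =
       (\<Sum>p\<in>{1..N}. X p p) * munit 1 1 i j"
      by (simp add: sum.delta sum_distrib_right)
    also have "(\<Sum>p\<in>{1..N}. \<Sum>q\<in>{1..N}. X p q * munit p q i j) = X i j"
      unfolding sum_units using X by (auto simp: sl_set_def is_mat_def)
    finally show "(\<Sum>p\<in>{1..N}. (\<lambda>i j. \<Sum>q\<in>{1..N}. G p q i j) i j) = X i j"
      using tr by simp
  qed
  ultimately show "X \<in> lie_gen N S" by simp
qed


context
  fixes n :: nat and a :: complex
  assumes n3: "n \<ge> 3" and a0: "a \<noteq> 0"
begin

lemma LL_sub: "X \<in> psi_image n a \<Longrightarrow> Y \<in> psi_image n a \<Longrightarrow> msub X Y \<in> psi_image n a"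
  unfolding psi_image_def by (rule lg_sub)

lemma LL_unscale: "msmult c X \<in> psi_image n a \<Longrightarrow> c \<noteq> 0 \<Longrightarrow> X \<in> psi_image n a"
  unfolding psi_image_def by (rule lg_unscale)

lemma unit_up: assumes "a \<noteq> 1" "a \<noteq> -1" "p \<in> {1..n}" "r \<in> {1..n}"
  shows "munit p (n+r) \<in> psi_image n a"
proof -
  let ?b = "inverse a"
  have "msub (Km n ?b p r) (msmult ?b (Km n ?b r p)) = msmult (1 - ?b * ?b) (munit p (n+r))"
    by (auto simp: Km_def mat_defs fun_eq_iff algebra_simps)
  moreover have "msub (Km n ?b p r) (msmult ?b (Km n ?b r p)) \<in> psi_image n a"
    using K_in[OF n3 a0] assms by (intro LL_sub LL_smult[OF n3 a0]) auto
  moreover have "1 - ?b * ?b \<noteq> 0"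
  proof
    assume "1 - ?b * ?b = 0"
    then have "a * a = 1" using a0 by (simp add: field_simps)
    then have "(a - 1) * (a + 1) = 0" by (simp add: algebra_simps)
    then show False using assms by (auto simp: eq_neg_iff_add_eq_0)
  qed
  ultimately show ?thesis using LL_unscale by metis
qed

lemma unit_lo: assumes "a \<noteq> 1" "a \<noteq> -1" "p \<in> {1..n}" "r \<in> {1..n}"
  shows "munit (n+r) p \<in> psi_image n a"
proof -
  have "msub (Kl n a r p) (msmult a (Kl n a p r)) = msmult (1 - a * a) (munit (n+r) p)"
    by (auto simp: Kl_def mat_defs fun_eq_iff algebra_simps)
  moreover have "msub (Kl n a r p) (msmult a (Kl n a p r)) \<in> psi_image n a"
    using Kl_in[OF n3 a0] assms by (intro LL_sub LL_smult[OF n3 a0]) auto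
  moreover have "1 - a * a \<noteq> 0"
  proof
    assume "1 - a * a = 0"
    then have "(a - 1) * (a + 1) = 0" by (simp add: algebra_simps)
    then show False using assms by (auto simp: eq_neg_iff_add_eq_0)
  qed
  ultimately show ?thesis using LL_unscale by metis
qed

lemma unit_all: assumes "a \<noteq> 1" "a \<noteq> -1" "p \<in> {1..2*n}" "q \<in> {1..2*n}" "p \<noteq> q"
  shows "munit p q \<in> psi_image n a"
proof -
  consider "p \<le> n" "q \<le> n" | "p \<le> n" "q > n" | "p > n" "q \<le> n" | "p > n" "q > n" by force
  then show ?thesis
  proof cases
    case 1
    have "bracket (2*n) (munit p (n+1)) (munit (n+1) q) = munit p q"
      using assms 1 by (intro bracket_units) auto
    moreover have "munit p (n+1) \<in> psi_image n a" "munit (n+1) q \<in> psi_image n a"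
      using unit_up[of p 1] unit_lo[of q 1] assms 1 by auto
    ultimately show ?thesis using LL_brk[OF n3 a0] by metis
  next
    case 2
    have "q - n \<in> {1..n}" using assms 2 by auto
    then show ?thesis using unit_up[of p "q - n"] assms 2 by auto
  next
    case 3
    have "p - n \<in> {1..n}" using assms 3 by auto
    then show ?thesis using unit_lo[of q "p - n"] assms 3 by auto
  next
    case 4
    have "bracket (2*n) (munit p 1) (munit 1 q) = munit p q"
      using assms 4 by (intro bracket_units) auto
    moreover have "munit p 1 \<in> psi_image n a" "munit 1 q \<in> psi_image n a"
    proof -
      have "p - n \<in> {1..n}" "q - n \<in> {1..n}" using assms 4 by auto
      then show "munit p 1 \<in> psi_image n a" "munit 1 q \<in> psi_image n a"
        using unit_up[of 1 "q - n"] unit_lo[of 1 "p - n"] assms 4 n3 by auto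
    qed
    ultimately show ?thesis using LL_brk[OF n3 a0] by metis
  qed
qed

lemma image_sl_eq: assumes "a \<noteq> 1" "a \<noteq> -1" shows "psi_image n a = sl_set (2*n)"
proof
  show "psi_image n a \<subseteq> sl_set (2*n)" by (rule image_sl[OF n3 a0])
  show "sl_set (2*n) \<subseteq> psi_image n a" unfolding psi_image_def
    apply (rule sl_in_gen)
    using n3 unit_all[OF assms] unfolding psi_image_def by auto
qed

end


definition Jg :: "nat \<Rightarrow> complex \<Rightarrow> cmat" where
  "Jg n c = (\<lambda>p q. if 1 \<le> p \<and> p \<le> n \<and> q = p + n then 1
                    else if n < p \<and> p \<le> 2*n \<and> q + n = p then c else 0)"
definition fs :: "nat \<Rightarrow> complex \<Rightarrow> cmat set" where
  "fs n c = {X. is_mat (2*n) X \<and>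
      madd (mmul (2*n) (mtrans X) (Jg n c)) (mmul (2*n) (Jg n c) X) = mzero}"
definition sg :: "nat \<Rightarrow> nat \<Rightarrow> nat" where "sg n j = (if j \<le> n then j + n else j - n)"
definition uu :: "nat \<Rightarrow> complex \<Rightarrow> nat \<Rightarrow> complex" where "uu n c j = (if j \<le> n then c else 1)"
definition vv :: "nat \<Rightarrow> complex \<Rightarrow> nat \<Rightarrow> complex" where "vv n c j = (if j \<le> n then 1 else c)"

lemma sp_fs: "sp_set n = fs n (-1)"
  by (simp add: sp_set_def fs_def Jmat_def Jg_def)

lemma sg_range: "j \<in> {1..2*n} \<Longrightarrow> sg n j \<in> {1..2*n}"
  by (auto simp: sg_def)
lemma sg_sg: "j \<in> {1..2*n} \<Longrightarrow> sg n (sg n j) = j"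
  by (auto simp: sg_def)

lemma Jg_col: "j \<in> {1..2*n} \<Longrightarrow> Jg n c k j = (if k = sg n j then uu n c j else 0)"
  by (auto simp: Jg_def sg_def uu_def)
lemma Jg_row: "i \<in> {1..2*n} \<Longrightarrow> Jg n c i k = (if k = sg n i then vv n c i else 0)"
  by (auto simp: Jg_def sg_def vv_def)

lemma T_point: assumes "i \<in> {1..2*n}" "j \<in> {1..2*n}"
  shows "madd (mmul (2*n) (mtrans X) (Jg n c)) (mmul (2*n) (Jg n c) X) i j =
     X (sg n j) i * uu n c j + vv n c i * X (sg n i) j"
proof -
  have "(\<Sum>k\<in>{1..2*n}. X k i * Jg n c k j) = X (sg n j) i * uu n c j"
    using assms sg_range[OF assms(2)] by (simp add: Jg_col[OF assms(2)] if_distrib[where f="\<lambda>x. _ * x"] sum.delta cong: if_cong)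
  moreover have "(\<Sum>k\<in>{1..2*n}. Jg n c i k * X k j) = vv n c i * X (sg n i) j"
    using assms sg_range[OF assms(1)] by (simp add: Jg_row[OF assms(1)] if_distrib[where f="\<lambda>x. x * _"] sum.delta cong: if_cong)
  ultimately show ?thesis by (simp add: madd_def mmul_def mtrans_def)
qed

lemma T_out: assumes "is_mat (2*n) X" "\<not> (i \<in> {1..2*n} \<and> j \<in> {1..2*n})"
  shows "madd (mmul (2*n) (mtrans X) (Jg n c)) (mmul (2*n) (Jg n c) X) i j = 0"
  using assms by (auto simp: madd_def mmul_def mtrans_def is_mat_def Jg_def intro!: sum.neutral)

lemma fs_iff: assumes "is_mat (2*n) X"
  shows "X \<in> fs n c \<longleftrightarrow> (\<forall>i\<in>{1..2*n}. \<forall>j\<in>{1..2*n}. X (sg n j) i * uu n c j + vv n c i * X (sg n i) j = 0)"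
proof
  assume "X \<in> fs n c"
  then show "\<forall>i\<in>{1..2*n}. \<forall>j\<in>{1..2*n}. X (sg n j) i * uu n c j + vv n c i * X (sg n i) j = 0"
    using T_point[of _ n _ X c] by (auto simp: fs_def mzero_def fun_eq_iff)
next
  assume h: "\<forall>i\<in>{1..2*n}. \<forall>j\<in>{1..2*n}. X (sg n j) i * uu n c j + vv n c i * X (sg n i) j = 0"
  have "madd (mmul (2*n) (mtrans X) (Jg n c)) (mmul (2*n) (Jg n c) X) i j = 0" for i j
    using h T_point[of i n j X c] T_out[OF assms, of i j c] by (cases "i \<in> {1..2*n} \<and> j \<in> {1..2*n}") auto
  then show "X \<in> fs n c" using assms by (auto simp: fs_def mzero_def fun_eq_iff)
qed


definition blk :: "nat \<Rightarrow> complex \<Rightarrow> cmat \<Rightarrow> bool" where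
  "blk n c X \<longleftrightarrow> (\<forall>s\<in>{1..n}. \<forall>r\<in>{1..n}.
     X (n+r) s * c + X (n+s) r = 0 \<and> X r s + X (n+s) (n+r) = 0 \<and>
     X (n+r) (n+s) * c + c * X s r = 0 \<and> X r (n+s) + c * X s (n+r) = 0)"

lemma half_cases: assumes "(i::nat) \<in> {1..2*n}" obtains "i \<in> {1..n}" | s where "s \<in> {1..n}" "i = n + s"
proof (cases "i \<le> n")
  case True then show ?thesis using assms that(1) by auto
next
  case False then show ?thesis using assms that(2)[of "i - n"] by auto
qed

lemma sg_lo: "i \<le> n \<Longrightarrow> sg n i = n + i" by (simp add: sg_def)
lemma sg_hi: "1 \<le> s \<Longrightarrow> sg n (n + s) = s" by (auto simp: sg_def)
lemma uv_lo: "i \<le> n \<Longrightarrow> uu n c i = c" "i \<le> n \<Longrightarrow> vv n c i = 1" by (simp_all add: uu_def vv_def)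
lemma uv_hi: "1 \<le> s \<Longrightarrow> uu n c (n+s) = 1" "1 \<le> s \<Longrightarrow> vv n c (n+s) = c" by (auto simp: uu_def vv_def)

lemma fs_blk: assumes "is_mat (2*n) X" shows "X \<in> fs n c \<longleftrightarrow> blk n c X"
  unfolding fs_iff[OF assms]
proof
  assume h: "\<forall>i\<in>{1..2*n}. \<forall>j\<in>{1..2*n}. X (sg n j) i * uu n c j + vv n c i * X (sg n i) j = 0"
  show "blk n c X" unfolding blk_def
  proof (intro ballI conjI)
    fix s r assume sr: "s \<in> {1..n}" "r \<in> {1..n}"
    have s2: "s \<in> {1..2*n}" "n + s \<in> {1..2*n}" "r \<in> {1..2*n}" "n + r \<in> {1..2*n}" using sr by auto
    have sg: "sg n s = n + s" "sg n r = n + r" "sg n (n+s) = s" "sg n (n+r) = r" using sr by (auto simp: sg_def)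
    have uv: "uu n c s = c" "uu n c r = c" "uu n c (n+s) = 1" "uu n c (n+r) = 1"
      "vv n c s = 1" "vv n c r = 1" "vv n c (n+s) = c" "vv n c (n+r) = c" using sr by (auto simp: uu_def vv_def)
    have "X (sg n r) s * uu n c r + vv n c s * X (sg n s) r = 0" using h s2 by blast
    then show "X (n+r) s * c + X (n+s) r = 0" using sg uv by simp
    have "X (sg n (n+r)) s * uu n c (n+r) + vv n c s * X (sg n s) (n+r) = 0" using h s2 by blast
    then show "X r s + X (n+s) (n+r) = 0" using sg uv by simp
    have "X (sg n r) (n+s) * uu n c r + vv n c (n+s) * X (sg n (n+s)) r = 0" using h s2 by blast
    then show "X (n+r) (n+s) * c + c * X s r = 0" using sg uv by simp
    have "X (sg n (n+r)) (n+s) * uu n c (n+r) + vv n c (n+s) * X (sg n (n+s)) (n+r) = 0" using h s2 by blast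
    then show "X r (n+s) + c * X s (n+r) = 0" using sg uv by simp
  qed
next
  assume h: "blk n c X"
  show "\<forall>i\<in>{1..2*n}. \<forall>j\<in>{1..2*n}. X (sg n j) i * uu n c j + vv n c i * X (sg n i) j = 0"
  proof (intro ballI)
    fix i j assume ij: "i \<in> {1..2*n}" "j \<in> {1..2*n}"
    show "X (sg n j) i * uu n c j + vv n c i * X (sg n i) j = 0"
    proof (cases rule: half_cases[OF ij(1)])
      case 1
      then show ?thesis
      proof (cases rule: half_cases[OF ij(2)])
        case 1 then show ?thesis using h \<open>i \<in> {1..n}\<close> by (auto simp: blk_def sg_lo sg_hi uv_lo uv_hi)
      next
        case (2 r) then show ?thesis using h \<open>i \<in> {1..n}\<close> by (auto simp: blk_def sg_lo sg_hi uv_lo uv_hi)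
      qed
    next
      case (2 s)
      then show ?thesis
      proof (cases rule: half_cases[OF ij(2)])
        case 1 then show ?thesis using h 2 by (auto simp: blk_def sg_lo sg_hi uv_lo uv_hi)
      next
        case (2 r) then show ?thesis using h \<open>s \<in> {1..n}\<close> \<open>i = n + s\<close> by (auto simp: blk_def sg_lo sg_hi uv_lo uv_hi)
      qed
    qed
  qed
qed


lemma Dm_ev: assumes "p \<in> {1..n}" "q \<in> {1..n}" "s \<in> {1..n}" "r \<in> {1..n}"
  shows "Dm n p q s r = (if s = p \<and> r = q then 1 else 0)" "Dm n p q (n+s) r = 0"
   "Dm n p q s (n+r) = 0" "Dm n p q (n+s) (n+r) = (if s = q \<and> r = p then -1 else 0)"
  using assms by (auto simp: Dm_def msub_def munit_def)

lemma Km_ev: assumes "p \<in> {1..n}" "q \<in> {1..n}" "s \<in> {1..n}" "r \<in> {1..n}"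
  shows "Km n b p q s r = 0" "Km n b p q (n+s) r = 0"
   "Km n b p q s (n+r) = (if s = p \<and> r = q then 1 else 0) + (if s = q \<and> r = p then b else 0)"
   "Km n b p q (n+s) (n+r) = 0"
  using assms by (auto simp: Km_def madd_def msmult_def munit_def)

lemma Kl_ev: assumes "p \<in> {1..n}" "q \<in> {1..n}" "s \<in> {1..n}" "r \<in> {1..n}"
  shows "Kl n b p q s r = 0" "Kl n b p q s (n+r) = 0"
   "Kl n b p q (n+s) r = (if s = p \<and> r = q then 1 else 0) + (if s = q \<and> r = p then b else 0)"
   "Kl n b p q (n+s) (n+r) = 0"
  using assms by (auto simp: Kl_def madd_def msmult_def munit_def)


lemma Dm_fs: assumes "p \<in> {1..n}" "q \<in> {1..n}" shows "Dm n p q \<in> fs n c"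
proof -
  have m: "is_mat (2*n) (Dm n p q)" using assms by (auto simp: Dm_def intro!: is_mat_ops is_mat_munit)
  show ?thesis unfolding fs_blk[OF m] blk_def
  proof (intro ballI)
    fix s r assume sr: "s \<in> {1..n}" "r \<in> {1..n}"
    have e: "Dm n p q (n + r) s = 0" "Dm n p q (n + s) r = 0" "Dm n p q r (n + s) = 0" "Dm n p q s (n + r) = 0"
      "Dm n p q r s + Dm n p q (n + s) (n + r) = 0" "Dm n p q (n + r) (n + s) * c + c * Dm n p q s r = 0"
      using assms sr by (simp_all add: Dm_ev)
    then show "Dm n p q (n + r) s * c + Dm n p q (n + s) r = 0 \<and>
          Dm n p q r s + Dm n p q (n + s) (n + r) = 0 \<and>
          Dm n p q (n + r) (n + s) * c + c * Dm n p q s r = 0 \<and>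
          Dm n p q r (n + s) + c * Dm n p q s (n + r) = 0"
      by simp
  qed
qed
lemma Km_fs: assumes "p \<in> {1..n}" "q \<in> {1..n}" "c * c = 1" shows "Km n (-c) p q \<in> fs n c"
proof -
  have m: "is_mat (2*n) (Km n (-c) p q)" using assms by (auto simp: Km_def intro!: is_mat_ops is_mat_munit)
  show ?thesis unfolding fs_blk[OF m] blk_def
  proof (intro ballI)
    fix s r assume sr: "s \<in> {1..n}" "r \<in> {1..n}"
    have e: "Km n (-c) p q (n + r) s = 0" "Km n (-c) p q (n + s) r = 0" "Km n (-c) p q r s = 0"
      "Km n (-c) p q (n + s) (n + r) = 0" "Km n (-c) p q (n + r) (n + s) = 0" "Km n (-c) p q s r = 0"
      using assms(1,2) sr by (simp_all add: Km_ev)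
    define X where "X = (if r = p \<and> s = q then 1 else (0::complex))"
    define Y where "Y = (if r = q \<and> s = p then 1 else (0::complex))"
    have k1: "Km n (-c) p q r (n + s) = X - c * Y" using assms sr by (simp add: Km_ev X_def Y_def)
    have k2: "Km n (-c) p q s (n + r) = Y - c * X" using assms sr by (simp add: Km_ev X_def Y_def conj_commute)
    have f: "Km n (-c) p q r (n + s) + c * Km n (-c) p q s (n + r) = 0"
      unfolding k1 k2 by (simp add: right_diff_distrib mult.assoc[symmetric] assms(3))
    show "Km n (-c) p q (n + r) s * c + Km n (-c) p q (n + s) r = 0 \<and>
          Km n (-c) p q r s + Km n (-c) p q (n + s) (n + r) = 0 \<and>
          Km n (-c) p q (n + r) (n + s) * c + c * Km n (-c) p q s r = 0 \<and>
          Km n (-c) p q r (n + s) + c * Km n (-c) p q s (n + r) = 0"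
      using e f by simp
  qed
qed

lemma Kl_fs: assumes "p \<in> {1..n}" "q \<in> {1..n}" "c * c = 1" shows "Kl n (-c) p q \<in> fs n c"
proof -
  have m: "is_mat (2*n) (Kl n (-c) p q)" using assms by (auto simp: Kl_def intro!: is_mat_ops is_mat_munit)
  show ?thesis unfolding fs_blk[OF m] blk_def
  proof (intro ballI)
    fix s r assume sr: "s \<in> {1..n}" "r \<in> {1..n}"
    have e: "Kl n (-c) p q r (n + s) = 0" "Kl n (-c) p q s (n + r) = 0" "Kl n (-c) p q r s = 0"
      "Kl n (-c) p q (n + s) (n + r) = 0" "Kl n (-c) p q (n + r) (n + s) = 0" "Kl n (-c) p q s r = 0"
      using assms(1,2) sr by (simp_all add: Kl_ev)
    define X where "X = (if r = p \<and> s = q then 1 else (0::complex))"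
    define Y where "Y = (if r = q \<and> s = p then 1 else (0::complex))"
    have k1: "Kl n (-c) p q (n + r) s = X - c * Y" using assms sr by (simp add: Kl_ev X_def Y_def)
    have k2: "Kl n (-c) p q (n + s) r = Y - c * X" using assms sr by (simp add: Kl_ev X_def Y_def conj_commute)
    have f: "Kl n (-c) p q (n + r) s * c + Kl n (-c) p q (n + s) r = 0"
    proof -
      have "(X - c * Y) * c + (Y - c * X) = Y * (1 - c * c)" by (simp add: algebra_simps)
      then show ?thesis unfolding k1 k2 using assms(3) by simp
    qed
    show "Kl n (-c) p q (n + r) s * c + Kl n (-c) p q (n + s) r = 0 \<and>
          Kl n (-c) p q r s + Kl n (-c) p q (n + s) (n + r) = 0 \<and>
          Kl n (-c) p q (n + r) (n + s) * c + c * Kl n (-c) p q s r = 0 \<and>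
          Kl n (-c) p q r (n + s) + c * Kl n (-c) p q s (n + r) = 0"
      using e f by simp
  qed
qed


lemma mtrans_mmul: "mtrans (mmul N A B) = mmul N (mtrans B) (mtrans A)"
  by (simp add: mtrans_def mmul_def fun_eq_iff mult.commute)
lemma mtrans_ops: "mtrans (msub A B) = msub (mtrans A) (mtrans B)"
  "mtrans (madd A B) = madd (mtrans A) (mtrans B)" "mtrans (msmult c A) = msmult c (mtrans A)"
  "mtrans mzero = mzero"
  by (simp_all add: mtrans_def mat_defs fun_eq_iff)
lemma mmul_assoc: "mmul N (mmul N A B) C = mmul N A (mmul N B C)"
proof -
  have "(\<Sum>k\<in>{1..N}. (\<Sum>m\<in>{1..N}. A p m * B m k) * C k q) =
        (\<Sum>m\<in>{1..N}. A p m * (\<Sum>k\<in>{1..N}. B m k * C k q))" for p q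
    by (simp add: sum_distrib_left sum_distrib_right mult.assoc) (rule sum.swap)
  then show ?thesis by (simp add: mmul_def fun_eq_iff)
qed

lemma msmult_m1: "msmult (-1) (msmult (-1) A) = A"
  by (simp add: msmult_def)

lemma madd_zero_neg: "madd A B = mzero \<Longrightarrow> A = msmult (-1) B"
proof -
  assume h: "madd A B = mzero"
  have "A p q = - B p q" for p q using fun_cong[OF fun_cong[OF h, of p], of q]
    by (simp add: mat_defs eq_neg_iff_add_eq_0)
  then show ?thesis by (simp add: msmult_def fun_eq_iff)
qed

lemma madd_zero2: "madd A B = mzero \<Longrightarrow> madd C D = mzero \<Longrightarrow> madd (madd A C) (madd B D) = mzero"
proof -
  assume h1: "madd A B = mzero" and h2: "madd C D = mzero"
  have "A p q + C p q + (B p q + D p q) = 0" for p q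
  proof -
    have "A p q + B p q = 0" "C p q + D p q = 0"
      using fun_cong[OF fun_cong[OF h1, of p], of q] fun_cong[OF fun_cong[OF h2, of p], of q] by (simp_all add: mat_defs)
    moreover have "A p q + C p q + (B p q + D p q) = (A p q + B p q) + (C p q + D p q)" by (simp add: algebra_simps)
    ultimately show ?thesis by simp
  qed
  then show ?thesis by (simp add: mat_defs fun_eq_iff)
qed

lemma madd_zero_sm: "madd A B = mzero \<Longrightarrow> madd (msmult d A) (msmult d B) = mzero"
proof -
  assume h1: "madd A B = mzero"
  have "d * A p q + d * B p q = 0" for p q
  proof -
    have "A p q + B p q = 0" using fun_cong[OF fun_cong[OF h1, of p], of q] by (simp add: mat_defs)
    then show ?thesis by (simp add: distrib_left[symmetric])
  qed
  then show ?thesis by (simp add: mat_defs fun_eq_iff)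
qed

lemma fs_zero: "mzero \<in> fs n c"
  by (simp add: fs_def is_mat_ops mtrans_ops mmul_simps) (simp add: mat_defs)

lemma fs_add: "X \<in> fs n c \<Longrightarrow> Y \<in> fs n c \<Longrightarrow> madd X Y \<in> fs n c"
  unfolding fs_def by (auto simp: is_mat_ops mtrans_ops mmul_simps intro: madd_zero2)

lemma fs_smult: "X \<in> fs n c \<Longrightarrow> msmult d X \<in> fs n c"
  unfolding fs_def by (auto simp: is_mat_ops mtrans_ops mmul_simps intro: madd_zero_sm)

lemma fs_brk: assumes X: "X \<in> fs n c" and Y: "Y \<in> fs n c" shows "bracket (2*n) X Y \<in> fs n c"
proof -
  let ?N = "2*n" and ?J = "Jg n c"
  have hX: "mmul ?N (mtrans X) ?J = msmult (-1) (mmul ?N ?J X)"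
    using X by (simp add: fs_def madd_zero_neg)
  have hY: "mmul ?N (mtrans Y) ?J = msmult (-1) (mmul ?N ?J Y)"
    using Y by (simp add: fs_def madd_zero_neg)
  have 1: "mmul ?N (mmul ?N (mtrans Y) (mtrans X)) ?J = mmul ?N (mmul ?N ?J Y) X"
  proof -
    have "mmul ?N (mmul ?N (mtrans Y) (mtrans X)) ?J = mmul ?N (mtrans Y) (mmul ?N (mtrans X) ?J)" by (rule mmul_assoc)
    also have "\<dots> = msmult (-1) (mmul ?N (mtrans Y) (mmul ?N ?J X))" by (simp add: hX mmul_simps)
    also have "\<dots> = msmult (-1) (mmul ?N (mmul ?N (mtrans Y) ?J) X)" by (simp add: mmul_assoc)
    also have "\<dots> = mmul ?N (mmul ?N ?J Y) X" by (simp add: hY mmul_simps msmult_m1)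
    finally show ?thesis .
  qed
  have 2: "mmul ?N (mmul ?N (mtrans X) (mtrans Y)) ?J = mmul ?N (mmul ?N ?J X) Y"
  proof -
    have "mmul ?N (mmul ?N (mtrans X) (mtrans Y)) ?J = mmul ?N (mtrans X) (mmul ?N (mtrans Y) ?J)" by (rule mmul_assoc)
    also have "\<dots> = msmult (-1) (mmul ?N (mtrans X) (mmul ?N ?J Y))" by (simp add: hY mmul_simps)
    also have "\<dots> = msmult (-1) (mmul ?N (mmul ?N (mtrans X) ?J) Y)" by (simp add: mmul_assoc)
    also have "\<dots> = mmul ?N (mmul ?N ?J X) Y" by (simp add: hX mmul_simps msmult_m1)
    finally show ?thesis .
  qed
  have "madd (mmul ?N (mtrans (bracket ?N X Y)) ?J) (mmul ?N ?J (bracket ?N X Y)) =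
     madd (msub (mmul ?N (mmul ?N ?J Y) X) (mmul ?N (mmul ?N ?J X) Y))
          (msub (mmul ?N ?J (mmul ?N X Y)) (mmul ?N ?J (mmul ?N Y X)))"
    by (simp add: bracket_def mtrans_ops mtrans_mmul mmul_simps 1 2)
  also have "\<dots> = mzero" by (simp add: mmul_assoc mat_defs fun_eq_iff)
  finally show ?thesis using X Y by (simp add: fs_def is_mat_ops)
qed


definition Pm :: "nat \<Rightarrow> complex \<Rightarrow> nat \<Rightarrow> nat \<Rightarrow> cmat" where
  "Pm n c p q = (\<lambda>i j. if i \<in> {1..2*n} \<and> j \<in> {1..2*n} then
      (munit p q i j - uu n c i * uu n c j * munit p q (sg n j) (sg n i)) / 2 else 0)"

lemma Pm_ev: assumes "s \<in> {1..n}" "r \<in> {1..n}" "c * c = 1"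
  shows "Pm n c p q s r = (munit p q s r - munit p q (n+r) (n+s)) / 2"
    "Pm n c p q s (n+r) = (munit p q s (n+r) - c * munit p q r (n+s)) / 2"
    "Pm n c p q (n+s) r = (munit p q (n+s) r - c * munit p q (n+r) s) / 2"
    "Pm n c p q (n+s) (n+r) = (munit p q (n+s) (n+r) - munit p q r s) / 2"
  using assms by (auto simp: Pm_def sg_lo sg_hi uv_lo uv_hi)

lemma munit_ev: assumes "s \<in> {1..n}" "r \<in> {1..n}" "x \<in> {1..n}" "y \<in> {1..n}"
  shows "munit x y s r = (if s = x \<and> r = y then 1 else 0)"
    "munit x y (n+s) r = 0" "munit x y s (n+r) = 0" "munit x y (n+s) (n+r) = 0"
    "munit (n+x) y s r = 0" "munit (n+x) y (n+s) r = (if s = x \<and> r = y then 1 else 0)"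
    "munit (n+x) y s (n+r) = 0" "munit (n+x) y (n+s) (n+r) = 0"
    "munit x (n+y) s r = 0" "munit x (n+y) (n+s) r = 0"
    "munit x (n+y) s (n+r) = (if s = x \<and> r = y then 1 else 0)" "munit x (n+y) (n+s) (n+r) = 0"
    "munit (n+x) (n+y) s r = 0" "munit (n+x) (n+y) (n+s) r = 0"
    "munit (n+x) (n+y) s (n+r) = 0" "munit (n+x) (n+y) (n+s) (n+r) = (if s = x \<and> r = y then 1 else 0)"
  using assms by (auto simp: munit_def)

lemma Pm_D: assumes "p \<in> {1..n}" "q \<in> {1..n}" "c * c = 1"
  shows "Pm n c p q = msmult (1/2) (Dm n p q)"
proof (intro ext)
  fix i j
  have m: "is_mat (2*n) (Dm n p q)" using assms by (auto simp: Dm_def intro!: is_mat_ops is_mat_munit)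
  show "Pm n c p q i j = msmult (1/2) (Dm n p q) i j"
  proof (cases "i \<in> {1..2*n} \<and> j \<in> {1..2*n}")
    case False
    then show ?thesis using m by (auto simp: Pm_def msmult_def is_mat_def)
  next
    case True
    then have i: "i \<in> {1..2*n}" and j: "j \<in> {1..2*n}" by auto
    show ?thesis
    proof (cases rule: half_cases[OF i])
      case 1
      then show ?thesis
      proof (cases rule: half_cases[OF j])
        case 1 then show ?thesis using assms \<open>i \<in> {1..n}\<close>
          by (simp add: Pm_ev munit_ev Dm_def mat_defs(1,2,3); auto simp: munit_def)
      next
        case (2 r) then show ?thesis using assms \<open>i \<in> {1..n}\<close>
          by (simp add: Pm_ev munit_ev Dm_def mat_defs(1,2,3); auto simp: munit_def)
      qed
    next
      case (2 s)
      then show ?thesis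
      proof (cases rule: half_cases[OF j])
        case 1 then show ?thesis using assms 2
          by (simp add: Pm_ev munit_ev Dm_def mat_defs(1,2,3); auto simp: munit_def)
      next
        case (2 r) then show ?thesis using assms \<open>s \<in> {1..n}\<close> \<open>i = n + s\<close>
          by (simp add: Pm_ev munit_ev Dm_def mat_defs(1,2,3); auto simp: munit_def)
      qed
    qed
  qed
qed

lemma Pm_DD: assumes "s \<in> {1..n}" "r \<in> {1..n}" "c * c = 1"
  shows "Pm n c (n+s) (n+r) = msmult (-1/2) (Dm n r s)"
proof (intro ext)
  fix i j
  have m: "is_mat (2*n) (Dm n r s)" using assms by (auto simp: Dm_def intro!: is_mat_ops is_mat_munit)
  show "Pm n c (n+s) (n+r) i j = msmult (-1/2) (Dm n r s) i j"
  proof (cases "i \<in> {1..2*n} \<and> j \<in> {1..2*n}")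
    case False
    then show ?thesis using m by (auto simp: Pm_def msmult_def is_mat_def)
  next
    case True
    then have i: "i \<in> {1..2*n}" and j: "j \<in> {1..2*n}" by auto
    show ?thesis
    proof (cases rule: half_cases[OF i])
      case 1
      then show ?thesis
      proof (cases rule: half_cases[OF j])
        case 1 then show ?thesis using assms \<open>i \<in> {1..n}\<close>
          by (simp add: Pm_ev munit_ev Dm_def mat_defs(1,2,3); auto simp: munit_def)
      next
        case (2 r) then show ?thesis using assms \<open>i \<in> {1..n}\<close>
          by (simp add: Pm_ev munit_ev Dm_def mat_defs(1,2,3); auto simp: munit_def)
      qed
    next
      case (2 s)
      then show ?thesis
      proof (cases rule: half_cases[OF j])
        case 1 then show ?thesis using assms 2
          by (simp add: Pm_ev munit_ev Dm_def mat_defs(1,2,3); auto simp: munit_def)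
      next
        case (2 r) then show ?thesis using assms \<open>s \<in> {1..n}\<close> \<open>i = n + s\<close>
          by (simp add: Pm_ev munit_ev Dm_def mat_defs(1,2,3); auto simp: munit_def)
      qed
    qed
  qed
qed

lemma Pm_K: assumes "p \<in> {1..n}" "r \<in> {1..n}" "c * c = 1"
  shows "Pm n c p (n+r) = msmult (1/2) (Km n (-c) p r)"
proof (intro ext)
  fix i j
  have m: "is_mat (2*n) (Km n (-c) p r)" using assms by (auto simp: Km_def intro!: is_mat_ops is_mat_munit)
  show "Pm n c p (n+r) i j = msmult (1/2) (Km n (-c) p r) i j"
  proof (cases "i \<in> {1..2*n} \<and> j \<in> {1..2*n}")
    case False
    then show ?thesis using m by (auto simp: Pm_def msmult_def is_mat_def)
  next
    case True
    then have i: "i \<in> {1..2*n}" and j: "j \<in> {1..2*n}" by auto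
    show ?thesis
    proof (cases rule: half_cases[OF i])
      case 1
      then show ?thesis
      proof (cases rule: half_cases[OF j])
        case 1 then show ?thesis using assms \<open>i \<in> {1..n}\<close>
          by (simp add: Pm_ev munit_ev Km_def mat_defs(1,2,3); auto simp: munit_def)
      next
        case (2 r) then show ?thesis using assms \<open>i \<in> {1..n}\<close>
          by (simp add: Pm_ev munit_ev Km_def mat_defs(1,2,3); auto simp: munit_def)
      qed
    next
      case (2 s)
      then show ?thesis
      proof (cases rule: half_cases[OF j])
        case 1 then show ?thesis using assms 2
          by (simp add: Pm_ev munit_ev Km_def mat_defs(1,2,3); auto simp: munit_def)
      next
        case (2 r) then show ?thesis using assms \<open>s \<in> {1..n}\<close> \<open>i = n + s\<close>
          by (simp add: Pm_ev munit_ev Km_def mat_defs(1,2,3); auto simp: munit_def)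
      qed
    qed
  qed
qed

lemma Pm_L: assumes "s \<in> {1..n}" "q \<in> {1..n}" "c * c = 1"
  shows "Pm n c (n+s) q = msmult (1/2) (Kl n (-c) s q)"
proof (intro ext)
  fix i j
  have m: "is_mat (2*n) (Kl n (-c) s q)" using assms by (auto simp: Kl_def intro!: is_mat_ops is_mat_munit)
  show "Pm n c (n+s) q i j = msmult (1/2) (Kl n (-c) s q) i j"
  proof (cases "i \<in> {1..2*n} \<and> j \<in> {1..2*n}")
    case False
    then show ?thesis using m by (auto simp: Pm_def msmult_def is_mat_def)
  next
    case True
    then have i: "i \<in> {1..2*n}" and j: "j \<in> {1..2*n}" by auto
    show ?thesis
    proof (cases rule: half_cases[OF i])
      case 1
      then show ?thesis
      proof (cases rule: half_cases[OF j])
        case 1 then show ?thesis using assms \<open>i \<in> {1..n}\<close>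
          by (simp add: Pm_ev munit_ev Kl_def mat_defs(1,2,3); auto simp: munit_def)
      next
        case (2 r) then show ?thesis using assms \<open>i \<in> {1..n}\<close>
          by (simp add: Pm_ev munit_ev Kl_def mat_defs(1,2,3); auto simp: munit_def)
      qed
    next
      case (2 s)
      then show ?thesis
      proof (cases rule: half_cases[OF j])
        case 1 then show ?thesis using assms 2
          by (simp add: Pm_ev munit_ev Kl_def mat_defs(1,2,3); auto simp: munit_def)
      next
        case (2 r) then show ?thesis using assms \<open>s \<in> {1..n}\<close> \<open>i = n + s\<close>
          by (simp add: Pm_ev munit_ev Kl_def mat_defs(1,2,3); auto simp: munit_def)
      qed
    qed
  qed
qed

lemma uu_sq: "c * c = 1 \<Longrightarrow> uu n c j * uu n c j = 1" by (simp add: uu_def)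
lemma vv_sg: "i \<in> {1..2*n} \<Longrightarrow> vv n c (sg n i) = uu n c i" by (auto simp: vv_def uu_def sg_def)

lemma fs_entry: assumes "X \<in> fs n c" "c * c = 1" "i \<in> {1..2*n}" "j \<in> {1..2*n}"
  shows "X (sg n j) (sg n i) = - (uu n c i * uu n c j * X i j)"
proof -
  have m: "is_mat (2*n) X" using assms by (simp add: fs_def)
  have "X (sg n j) (sg n i) * uu n c j + vv n c (sg n i) * X (sg n (sg n i)) j = 0"
    using assms(1) sg_range[OF assms(3)] assms(4) unfolding fs_iff[OF m] by blast
  then have "X (sg n j) (sg n i) * uu n c j = - (uu n c i * X i j)"
    using assms by (simp add: sg_sg vv_sg eq_neg_iff_add_eq_0)
  then have "X (sg n j) (sg n i) * uu n c j * uu n c j = - (uu n c i * X i j) * uu n c j" by simp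
  moreover have "X (sg n j) (sg n i) * uu n c j * uu n c j = X (sg n j) (sg n i)"
    using uu_sq[OF assms(2), of n j] by (simp add: mult.assoc)
  ultimately have "X (sg n j) (sg n i) = - (uu n c i * X i j) * uu n c j" by simp
  then show ?thesis by (simp add: algebra_simps)
qed

lemma fs_in_gen: assumes c: "c * c = 1"
  and hD: "\<And>p q. p \<in> {1..n} \<Longrightarrow> q \<in> {1..n} \<Longrightarrow> Dm n p q \<in> lie_gen (2*n) S"
  and hK: "\<And>p q. p \<in> {1..n} \<Longrightarrow> q \<in> {1..n} \<Longrightarrow> Km n (-c) p q \<in> lie_gen (2*n) S"
  and hL: "\<And>p q. p \<in> {1..n} \<Longrightarrow> q \<in> {1..n} \<Longrightarrow> Kl n (-c) p q \<in> lie_gen (2*n) S"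
  shows "fs n c \<subseteq> lie_gen (2*n) S"
proof
  fix X assume X: "X \<in> fs n c"
  have P: "Pm n c p q \<in> lie_gen (2*n) S" if "p \<in> {1..2*n}" "q \<in> {1..2*n}" for p q
  proof (cases rule: half_cases[OF that(1)])
    case 1
    then show ?thesis
    proof (cases rule: half_cases[OF that(2)])
      case 1 then show ?thesis using \<open>p \<in> {1..n}\<close> Pm_D[of p n q c] c hD by (simp add: lie_gen.smult)
    next
      case (2 r) then show ?thesis using \<open>p \<in> {1..n}\<close> Pm_K[of p n r c] c hK by (simp add: lie_gen.smult)
    qed
  next
    case (2 s)
    then show ?thesis
    proof (cases rule: half_cases[OF that(2)])
      case 1 then show ?thesis using 2 Pm_L[of s n q c] c hL by (simp add: lie_gen.smult)
    next
      case (2 r) then show ?thesis using \<open>s \<in> {1..n}\<close> \<open>p = n + s\<close> Pm_DD[of s n r c] c hD by (simp add: lie_gen.smult)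
    qed
  qed
  have "(\<lambda>i j. \<Sum>p\<in>{1..2*n}. (\<lambda>i j. \<Sum>q\<in>{1..2*n}. msmult (X p q) (Pm n c p q) i j) i j) \<in> lie_gen (2*n) S"
    by (intro lg_sum lie_gen.smult P) auto
  moreover have "(\<lambda>i j. \<Sum>p\<in>{1..2*n}. (\<lambda>i j. \<Sum>q\<in>{1..2*n}. msmult (X p q) (Pm n c p q) i j) i j) = X"
  proof (intro ext)
    fix i j
    show "(\<Sum>p\<in>{1..2*n}. (\<lambda>i j. \<Sum>q\<in>{1..2*n}. msmult (X p q) (Pm n c p q) i j) i j) = X i j"
    proof (cases "i \<in> {1..2*n} \<and> j \<in> {1..2*n}")
      case False
      then show ?thesis using X by (auto simp: msmult_def Pm_def fs_def is_mat_def)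
    next
      case True
      let ?w = "uu n c i * uu n c j"
      have "(\<Sum>p\<in>{1..2*n}. \<Sum>q\<in>{1..2*n}. msmult (X p q) (Pm n c p q) i j) =
        (\<Sum>p\<in>{1..2*n}. \<Sum>q\<in>{1..2*n}. (X p q * munit p q i j - ?w * (X p q * munit p q (sg n j) (sg n i))) / 2)"
        using True by (intro sum.cong refl) (simp add: msmult_def Pm_def algebra_simps)
      also have "\<dots> = ((\<Sum>p\<in>{1..2*n}. \<Sum>q\<in>{1..2*n}. X p q * munit p q i j)
          - ?w * (\<Sum>p\<in>{1..2*n}. \<Sum>q\<in>{1..2*n}. X p q * munit p q (sg n j) (sg n i))) / 2"
        by (simp only: diff_divide_distrib sum_divide_distrib sum_subtractf sum_distrib_left)
      also have "\<dots> = (X i j - ?w * X (sg n j) (sg n i)) / 2"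
        unfolding sum_units using True sg_range[of j n] sg_range[of i n] by simp
      also have "\<dots> = (X i j + (uu n c i * uu n c i) * (uu n c j * uu n c j) * X i j) / 2"
        using fs_entry[OF X c] True by (simp add: algebra_simps)
      also have "\<dots> = X i j" using uu_sq[OF c] by simp
      finally show ?thesis by simp
    qed
  qed
  ultimately show "X \<in> lie_gen (2*n) S" by simp
qed


context
  fixes n :: nat and a :: complex
  assumes n3: "n \<ge> 3" and a0: "a \<noteq> 0"
begin

lemma hn_D: "psiH n a n = madd (Dm n 1 1) (Dm n n n)"
  using n3 a0 by (simp add: psiH_def psiE_def psiF_def bracket_def mmul_simps Dm_def) (auto simp: fun_eq_iff mat_defs)

lemma Dm_diag_in: assumes "p \<in> {1..n}" shows "Dm n p p \<in> psi_image n a"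
proof -
  have hn: "madd (Dm n 1 1) (Dm n n n) \<in> psi_image n a" using gen_in(3)[OF n3 a0, of n] n3 hn_D by auto
  have d: "msub (Dm n p p) (Dm n q q) \<in> psi_image n a" if "p \<in> {1..n}" "q \<in> {1..n}" "p \<noteq> q" for p q
    using D_D_diag[OF that(3,1,2)] LL_brk[OF n3 a0 D_in[OF n3 a0 that(1,2,3)] D_in[OF n3 a0 that(2,1)]] that(3) by auto
  have "madd (madd (Dm n 1 1) (Dm n n n)) (msub (Dm n 1 1) (Dm n n n)) \<in> psi_image n a"
    using hn d[of 1 n] n3 unfolding psi_image_def by (auto intro: lie_gen.add)
  moreover have "madd (madd (Dm n 1 1) (Dm n n n)) (msub (Dm n 1 1) (Dm n n n)) = msmult 2 (Dm n 1 1)"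
    by (simp add: mat_defs fun_eq_iff)
  ultimately have 1: "Dm n 1 1 \<in> psi_image n a" using LL_unscale[OF n3 a0, of 2] by simp
  show ?thesis
  proof (cases "p = 1")
    case True then show ?thesis using 1 by simp
  next
    case False
    have "msub (Dm n 1 1) (msub (Dm n 1 1) (Dm n p p)) \<in> psi_image n a"
      using LL_sub[OF n3 a0 1 d[of 1 p]] False assms by auto
    moreover have "msub (Dm n 1 1) (msub (Dm n 1 1) (Dm n p p)) = Dm n p p" by (simp add: mat_defs fun_eq_iff)
    ultimately show ?thesis by simp
  qed
qed

lemma Dm_all_in: "p \<in> {1..n} \<Longrightarrow> q \<in> {1..n} \<Longrightarrow> Dm n p q \<in> psi_image n a"
  using Dm_diag_in D_in[OF n3 a0] by (cases "p = q") auto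

lemma image_fs: assumes "a = 1 \<or> a = -1" shows "psi_image n a = fs n (-a)"
proof
  have aa: "inverse a = a" "- (- a) = a" "(-a) * (-a) = 1" using assms by auto
  show "fs n (-a) \<subseteq> psi_image n a" unfolding psi_image_def
  proof (rule fs_in_gen)
    show "(-a) * (-a) = 1" using aa by simp
  next
    fix p q assume "p \<in> {1..n}" "q \<in> {1..n}"
    then show "Dm n p q \<in> lie_gen (2*n) (\<Union>i\<in>{1..n}. {psiE n a i, psiF n a i, psiH n a i})"
      "Km n (- (- a)) p q \<in> lie_gen (2*n) (\<Union>i\<in>{1..n}. {psiE n a i, psiF n a i, psiH n a i})"
      "Kl n (- (- a)) p q \<in> lie_gen (2*n) (\<Union>i\<in>{1..n}. {psiE n a i, psiF n a i, psiH n a i})"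
      using Dm_all_in K_in[OF n3 a0] Kl_in[OF n3 a0] aa unfolding psi_image_def by auto
  qed
  show "psi_image n a \<subseteq> fs n (-a)"
  proof
    fix X assume "X \<in> psi_image n a"
    then show "X \<in> fs n (-a)" unfolding psi_image_def
    proof (induction rule: lie_gen.induct)
      case (gen X)
      then obtain i where i: "i \<in> {1..n}" "X = psiE n a i \<or> X = psiF n a i \<or> X = psiH n a i" by auto
      have E: "psiE n a i \<in> fs n (-a)"
      proof (cases "i < n")
        case True
        then have "psiE n a i = Dm n i (i+1)" by (simp add: psiE_def Dm_def add.commute add.left_commute)
        then show ?thesis using Dm_fs[of i n "i+1" "-a"] i True by auto
      next
        case False
        then have "i = n" using i by auto
        then show ?thesis using en_K[OF n3 a0] Km_fs[of n n 1 "-a"] aa n3 by auto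
      qed
      have F: "psiF n a i \<in> fs n (-a)"
      proof (cases "i < n")
        case True
        then have "psiF n a i = Dm n (i+1) i" by (simp add: psiF_def Dm_def add.commute add.left_commute)
        then show ?thesis using Dm_fs[of "i+1" n i "-a"] i True by auto
      next
        case False
        then have "i = n" using i by auto
        then show ?thesis using fn_Kl[OF n3 a0] Kl_fs[of 1 n n "-a"] aa n3 by auto
      qed
      have "psiH n a i \<in> fs n (-a)" unfolding psiH_def by (rule fs_brk[OF E F])
      then show ?case using i E F by auto
    next
      case zero then show ?case by (rule fs_zero)
    next
      case (add X Y) then show ?case by (blast intro: fs_add)
    next
      case (smult X c) then show ?case by (blast intro: fs_smult)
    next
      case (brk X Y) then show ?case by (blast intro: fs_brk)
    qed
  qed
qed

lemma sp_case: assumes "a = 1" shows "lie_iso (2*n) (psi_image n a) (2*n) (sp_set n)"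
proof -
  have "psi_image n a = sp_set n" using image_fs sp_fs assms by simp
  then show ?thesis unfolding lie_iso_def by (intro exI[of _ id]) auto
qed

end


definition blk4 :: "nat \<Rightarrow> complex \<Rightarrow> complex \<Rightarrow> complex \<Rightarrow> complex \<Rightarrow> cmat" where
  "blk4 n \<alpha> \<beta> \<gamma> \<delta> = (\<lambda>p q.
     if 1 \<le> p \<and> p \<le> n then (if q = p then \<alpha> else if q = p + n then \<beta> else 0)
     else if n < p \<and> p \<le> 2*n then (if q + n = p then \<gamma> else if q = p then \<delta> else 0)
     else 0)"

lemma blk4_row_lo: "s \<in> {1..n} \<Longrightarrow> blk4 n \<alpha> \<beta> \<gamma> \<delta> s k = (if k = s then \<alpha> else 0) + (if k = n + s then \<beta> else 0)"
  by (auto simp: blk4_def)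
lemma blk4_row_hi: "s \<in> {1..n} \<Longrightarrow> blk4 n \<alpha> \<beta> \<gamma> \<delta> (n+s) k = (if k = s then \<gamma> else 0) + (if k = n + s then \<delta> else 0)"
  by (auto simp: blk4_def)
lemma blk4_out: "\<not> (p \<in> {1..2*n}) \<Longrightarrow> blk4 n \<alpha> \<beta> \<gamma> \<delta> p k = 0"
  by (auto simp: blk4_def)
lemma blk4_col_out: "\<not> (k \<in> {1..2*n}) \<Longrightarrow> blk4 n \<alpha> \<beta> \<gamma> \<delta> p k = 0"
  by (auto simp: blk4_def)

lemma is_mat_blk4: "is_mat (2*n) (blk4 n \<alpha> \<beta> \<gamma> \<delta>)"
  by (auto simp: is_mat_def blk4_def)

lemma sum_row: fixes x y :: complex and B :: cmat assumes "s \<in> {1..(n::nat)}"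
  shows "(\<Sum>k::nat\<in>{1..2*n}. ((if k = s then x else 0) + (if k = n + s then y else 0)) * B k q) =
     x * B s q + y * B (n+s) q"
proof -
  have "(\<Sum>k::nat\<in>{1..2*n}. ((if k = s then x else 0) + (if k = n + s then y else 0)) * B k q) =
     (\<Sum>k\<in>{1..2*n}. (if k = s then x * B k q else 0)) + (\<Sum>k\<in>{1..2*n}. (if k = n + s then y * B k q else 0))"
  proof -
    have e: "((if k = s then x else 0) + (if k = n + s then y else 0)) * B k q =
      (if k = s then x * B k q else 0) + (if k = n + s then y * B k q else 0)" for k by (auto simp: distrib_right)
    show ?thesis by (simp only: e sum.distrib)
  qed
  also have "\<dots> = x * B s q + y * B (n+s) q" using assms by (simp add: sum.delta)
  finally show ?thesis .
qed

lemma mmul_blk4_row_lo: "s \<in> {1..n} \<Longrightarrow> mmul (2*n) (blk4 n \<alpha> \<beta> \<gamma> \<delta>) B s q = \<alpha> * B s q + \<beta> * B (n+s) q"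
  using sum_row[of s n \<alpha> \<beta> B q] by (simp add: mmul_def blk4_row_lo)
lemma mmul_blk4_row_hi: "s \<in> {1..n} \<Longrightarrow> mmul (2*n) (blk4 n \<alpha> \<beta> \<gamma> \<delta>) B (n+s) q = \<gamma> * B s q + \<delta> * B (n+s) q"
  using sum_row[of s n \<gamma> \<delta> B q] by (simp add: mmul_def blk4_row_hi)

lemma half_cases2: assumes "(i::nat) \<in> {1..2*n}" obtains "i \<in> {1..n}" | s where "s \<in> {1..n}" "i = n + s"
proof (cases "i \<le> n")
  case True then show ?thesis using assms that(1) by auto
next
  case False then show ?thesis using assms that(2)[of "i - n"] by auto
qed

lemma blk4_ev: assumes "s \<in> {1..n}" "r \<in> {1..n}"
  shows "blk4 n \<alpha> \<beta> \<gamma> \<delta> s r = (if r = s then \<alpha> else 0)"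
   "blk4 n \<alpha> \<beta> \<gamma> \<delta> s (n+r) = (if r = s then \<beta> else 0)"
   "blk4 n \<alpha> \<beta> \<gamma> \<delta> (n+s) r = (if r = s then \<gamma> else 0)"
   "blk4 n \<alpha> \<beta> \<gamma> \<delta> (n+s) (n+r) = (if r = s then \<delta> else 0)"
  using assms by (auto simp: blk4_def)

lemma mmul_blk4: "mmul (2*n) (blk4 n \<alpha> \<beta> \<gamma> \<delta>) (blk4 n \<alpha>' \<beta>' \<gamma>' \<delta>') =
   blk4 n (\<alpha>*\<alpha>' + \<beta>*\<gamma>') (\<alpha>*\<beta>' + \<beta>*\<delta>') (\<gamma>*\<alpha>' + \<delta>*\<gamma>') (\<gamma>*\<beta>' + \<delta>*\<delta>')"
proof (intro ext)
  fix p q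
  show "mmul (2*n) (blk4 n \<alpha> \<beta> \<gamma> \<delta>) (blk4 n \<alpha>' \<beta>' \<gamma>' \<delta>') p q =
    blk4 n (\<alpha>*\<alpha>' + \<beta>*\<gamma>') (\<alpha>*\<beta>' + \<beta>*\<delta>') (\<gamma>*\<alpha>' + \<delta>*\<gamma>') (\<gamma>*\<beta>' + \<delta>*\<delta>') p q"
  proof (cases "p \<in> {1..2*n} \<and> q \<in> {1..2*n}")
    case False
    then show ?thesis by (auto simp: mmul_def blk4_out blk4_col_out)
  next
    case True
    then have p: "p \<in> {1..2*n}" and q: "q \<in> {1..2*n}" by auto
    show ?thesis
    proof (cases rule: half_cases2[OF p])
      case 1
      then show ?thesis
        by (cases rule: half_cases2[OF q]) (auto simp: mmul_blk4_row_lo blk4_ev)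
    next
      case (2 s)
      then show ?thesis
        by (cases rule: half_cases2[OF q]) (auto simp: mmul_blk4_row_hi blk4_ev)
    qed
  qed
qed

lemma blk4_eq_cases: assumes "is_mat (2*n) A"
  and "\<And>s r. s \<in> {1..n} \<Longrightarrow> r \<in> {1..n} \<Longrightarrow> A s r = blk4 n \<alpha> \<beta> \<gamma> \<delta> s r"
  and "\<And>s r. s \<in> {1..n} \<Longrightarrow> r \<in> {1..n} \<Longrightarrow> A s (n+r) = blk4 n \<alpha> \<beta> \<gamma> \<delta> s (n+r)"
  and "\<And>s r. s \<in> {1..n} \<Longrightarrow> r \<in> {1..n} \<Longrightarrow> A (n+s) r = blk4 n \<alpha> \<beta> \<gamma> \<delta> (n+s) r"
  and "\<And>s r. s \<in> {1..n} \<Longrightarrow> r \<in> {1..n} \<Longrightarrow> A (n+s) (n+r) = blk4 n \<alpha> \<beta> \<gamma> \<delta> (n+s) (n+r)"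
  shows "A = blk4 n \<alpha> \<beta> \<gamma> \<delta>"
proof (intro ext)
  fix p q
  show "A p q = blk4 n \<alpha> \<beta> \<gamma> \<delta> p q"
  proof (cases "p \<in> {1..2*n} \<and> q \<in> {1..2*n}")
    case False
    then show ?thesis using assms(1) by (auto simp: is_mat_def blk4_out blk4_col_out)
  next
    case True
    then have p: "p \<in> {1..2*n}" and q: "q \<in> {1..2*n}" by auto
    show ?thesis
    proof (cases rule: half_cases2[OF p])
      case 1
      then show ?thesis by (cases rule: half_cases2[OF q]) (auto intro: assms(2,3))
    next
      case (2 s)
      then show ?thesis by (cases rule: half_cases2[OF q]) (auto intro: assms(4,5))
    qed
  qed
qed

lemma mtrans_blk4: "mtrans (blk4 n \<alpha> \<beta> \<gamma> \<delta>) = blk4 n \<alpha> \<gamma> \<beta> \<delta>"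
  by (rule blk4_eq_cases) (auto simp: mtrans_def blk4_ev is_mat_def blk4_out blk4_col_out)

lemma Jg_ev: assumes "s \<in> {1..n}" "r \<in> {1..n}"
  shows "Jg n c s r = 0" "Jg n c s (n+r) = (if r = s then 1 else 0)"
    "Jg n c (n+s) r = (if r = s then c else 0)" "Jg n c (n+s) (n+r) = 0"
  using assms by (auto simp: Jg_def)

lemma Jg1_blk4: "Jg n 1 = blk4 n 0 1 1 0"
proof (rule blk4_eq_cases)
  show "is_mat (2*n) (Jg n 1)" by (auto simp: is_mat_def Jg_def)
qed (simp_all add: Jg_ev blk4_ev)

lemma mmul_id_left: assumes Y: "is_mat (2*n) Y" shows "mmul (2*n) (blk4 n 1 0 0 1) Y = Y"
proof (intro ext)
  fix p q
  show "mmul (2*n) (blk4 n 1 0 0 1) Y p q = Y p q"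
  proof (cases "p \<in> {1..2*n}")
    case False
    then show ?thesis using Y by (auto simp: mmul_def blk4_out is_mat_def)
  next
    case True
    then show ?thesis
      by (cases rule: half_cases2[OF True]) (simp_all add: mmul_blk4_row_lo mmul_blk4_row_hi)
  qed
qed

lemma mmul_id_right: assumes Y: "is_mat (2*n) Y" shows "mmul (2*n) Y (blk4 n 1 0 0 1) = Y"
proof -
  have mt: "is_mat (2*n) (mtrans Y)" using Y by (auto simp: is_mat_def mtrans_def)
  have tt: "mtrans (mtrans A) = A" for A by (simp add: mtrans_def)
  have "mmul (2*n) Y (blk4 n 1 0 0 1) = mtrans (mmul (2*n) (blk4 n 1 0 0 1) (mtrans Y))"
    by (simp only: mtrans_mmul mtrans_blk4 tt)
  also have "\<dots> = Y" using mmul_id_left[OF mt] by (simp add: tt)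
  finally show ?thesis .
qed


lemma msmult_blk4: "msmult c (blk4 n \<alpha> \<beta> \<gamma> \<delta>) = blk4 n (c*\<alpha>) (c*\<beta>) (c*\<gamma>) (c*\<delta>)"
  by (auto simp: msmult_def blk4_def fun_eq_iff)

lemma msmult_simps_R: "msmult c (msub A B) = msub (msmult c A) (msmult c B)"
  "msmult c (madd A B) = madd (msmult c A) (msmult c B)"
  "msmult c (msmult d A) = msmult (c*d) A"
  by (simp_all add: mat_defs fun_eq_iff algebra_simps)

definition "Pb n = blk4 n 1 1 \<i> (-\<i>)"
definition "Qb n = blk4 n (1/2) (-\<i>/2) (1/2) (\<i>/2)"
definition "Ib n = blk4 n 1 0 0 1"
definition "Jb n = blk4 n 0 1 1 0"
definition "phi n X = mmul (2*n) (Pb n) (mmul (2*n) X (Qb n))"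
definition "psi n Y = mmul (2*n) (Qb n) (mmul (2*n) Y (Pb n))"

lemma PQ: "mmul (2*n) (Pb n) (Qb n) = Ib n"
  unfolding Pb_def Qb_def Ib_def mmul_blk4 by (simp add: field_simps)
lemma QP: "mmul (2*n) (Qb n) (Pb n) = Ib n"
  unfolding Pb_def Qb_def Ib_def mmul_blk4 by (simp add: field_simps)
lemma QtJ: "mmul (2*n) (mtrans (Qb n)) (Jb n) = msmult (1/2) (Pb n)"
  by (simp add: Pb_def Qb_def Jb_def mmul_blk4 mtrans_blk4 msmult_blk4)
lemma JQ: "mmul (2*n) (Jb n) (Qb n) = msmult (1/2) (mtrans (Pb n))"
  by (simp add: Pb_def Qb_def Jb_def mmul_blk4 mtrans_blk4 msmult_blk4)
lemma JPt: "mmul (2*n) (Jb n) (mtrans (Pb n)) = msmult 2 (Qb n)"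
  by (simp add: Pb_def Qb_def Jb_def mmul_blk4 mtrans_blk4 msmult_blk4)
lemma JJ: "mmul (2*n) (Jb n) (Jb n) = Ib n"
  by (simp add: Ib_def Jb_def mmul_blk4)

lemma fs1: "fs n 1 = {X. is_mat (2*n) X \<and> madd (mmul (2*n) (mtrans X) (Jb n)) (mmul (2*n) (Jb n) X) = mzero}"
  by (simp add: fs_def Jb_def Jg1_blk4)

lemma is_mat_PQ: "is_mat (2*n) (Pb n)" "is_mat (2*n) (Qb n)" "is_mat (2*n) (Jb n)"
  by (simp_all add: Pb_def Qb_def Jb_def is_mat_blk4)

lemma is_mat_mmul_any: "is_mat N A \<Longrightarrow> is_mat N B \<Longrightarrow> is_mat N (mmul N A B)"
  by (rule is_mat_ops(5))

lemma is_mat_mtrans: "is_mat N A \<Longrightarrow> is_mat N (mtrans A)"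
  by (auto simp: is_mat_def mtrans_def)

lemma msmult_mmul: "mmul N (msmult c A) (msmult d B) = msmult (c*d) (mmul N A B)"
  by (simp add: mmul_simps msmult_simps_R) (simp add: mult.commute)

lemma phi_so: assumes X: "X \<in> fs n 1" shows "phi n X \<in> so_set (2*n)"
proof -
  have m: "is_mat (2*n) X" using X by (simp add: fs_def)
  have h: "mmul (2*n) (mtrans X) (Jb n) = msmult (-1) (mmul (2*n) (Jb n) X)"
    using X by (simp add: fs1 madd_zero_neg)
  have Xt: "mtrans X = msmult (-1) (mmul (2*n) (mmul (2*n) (Jb n) X) (Jb n))"
  proof -
    have "mtrans X = mmul (2*n) (mtrans X) (Ib n)" using mmul_id_right[OF is_mat_mtrans[OF m]] by (simp add: Ib_def)
    also have "\<dots> = mmul (2*n) (mmul (2*n) (mtrans X) (Jb n)) (Jb n)" by (simp add: JJ mmul_assoc)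
    also have "\<dots> = msmult (-1) (mmul (2*n) (mmul (2*n) (Jb n) X) (Jb n))" by (simp add: h mmul_simps)
    finally show ?thesis .
  qed
  have "mtrans (phi n X) = mmul (2*n) (mmul (2*n) (mtrans (Qb n)) (mtrans X)) (mtrans (Pb n))"
    by (simp add: phi_def mtrans_mmul)
  also have "\<dots> = msmult (-1) (mmul (2*n) (mmul (2*n) (mtrans (Qb n)) (Jb n)) (mmul (2*n) X (mmul (2*n) (Jb n) (mtrans (Pb n)))))"
    by (simp add: Xt mmul_simps mmul_assoc)
  also have "\<dots> = msmult (-1) (phi n X)"
    by (simp add: QtJ JPt msmult_mmul mmul_simps msmult_simps_R phi_def mmul_assoc)
  finally have "mtrans (phi n X) = msmult (-1) (phi n X)" .
  moreover have "is_mat (2*n) (phi n X)" using m by (simp add: phi_def is_mat_mmul_any is_mat_PQ)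
  ultimately show ?thesis by (simp add: so_set_def)
qed

lemma psi_fs: assumes Y: "Y \<in> so_set (2*n)" shows "psi n Y \<in> fs n 1"
proof -
  have m: "is_mat (2*n) Y" and t: "mtrans Y = msmult (-1) Y" using Y by (auto simp: so_set_def)
  have "mmul (2*n) (mtrans (psi n Y)) (Jb n) = mmul (2*n) (mmul (2*n) (mtrans (Pb n)) (mtrans Y)) (mmul (2*n) (mtrans (Qb n)) (Jb n))"
    by (simp add: psi_def mtrans_mmul mmul_assoc)
  also have "\<dots> = msmult (-1/2) (mmul (2*n) (mtrans (Pb n)) (mmul (2*n) Y (Pb n)))"
    by (simp add: t QtJ mmul_simps msmult_simps_R mmul_assoc)
  finally have 1: "mmul (2*n) (mtrans (psi n Y)) (Jb n) = msmult (-1/2) (mmul (2*n) (mtrans (Pb n)) (mmul (2*n) Y (Pb n)))" .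
  have 2: "mmul (2*n) (Jb n) (psi n Y) = msmult (1/2) (mmul (2*n) (mtrans (Pb n)) (mmul (2*n) Y (Pb n)))"
    by (simp add: psi_def JQ mmul_simps flip: mmul_assoc)
  have "madd (mmul (2*n) (mtrans (psi n Y)) (Jb n)) (mmul (2*n) (Jb n) (psi n Y)) = mzero"
    unfolding 1 2 by (simp add: mat_defs fun_eq_iff)
  moreover have "is_mat (2*n) (psi n Y)" using m by (simp add: psi_def is_mat_mmul_any is_mat_PQ)
  ultimately show ?thesis by (simp add: fs1)
qed

lemma psi_phi: "is_mat (2*n) X \<Longrightarrow> psi n (phi n X) = X"
  by (simp add: psi_def phi_def mmul_assoc QP Ib_def mmul_id_left mmul_id_right is_mat_mmul_any is_mat_PQ
        flip: mmul_assoc[of _ "Qb n" "Pb n"])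

lemma phi_psi: assumes Y: "is_mat (2*n) Y" shows "phi n (psi n Y) = Y"
proof -
  have "phi n (psi n Y) = mmul (2*n) (mmul (2*n) (Pb n) (Qb n)) (mmul (2*n) (mmul (2*n) Y (Pb n)) (Qb n))"
    by (simp add: phi_def psi_def mmul_assoc)
  also have "\<dots> = mmul (2*n) (Ib n) (mmul (2*n) Y (Ib n))"
    by (simp add: PQ mmul_assoc)
  also have "\<dots> = mmul (2*n) Y (mmul (2*n) (Pb n) (Qb n))"
    using Y by (simp add: PQ Ib_def mmul_id_left is_mat_mmul_any is_mat_blk4)
  also have "\<dots> = Y" using Y by (simp add: PQ Ib_def mmul_id_right)
  finally show ?thesis .
qed

lemma phi_mul: assumes "is_mat (2*n) Y" shows "mmul (2*n) (phi n X) (phi n Y) = phi n (mmul (2*n) X Y)"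
proof -
  have yq: "is_mat (2*n) (mmul (2*n) Y (Qb n))" using assms by (simp add: is_mat_mmul_any is_mat_PQ)
  have "mmul (2*n) (phi n X) (phi n Y) = mmul (2*n) (Pb n) (mmul (2*n) X (mmul (2*n) (mmul (2*n) (Qb n) (Pb n)) (mmul (2*n) Y (Qb n))))"
    by (simp add: phi_def mmul_assoc)
  also have "\<dots> = phi n (mmul (2*n) X Y)"
    by (simp add: QP Ib_def mmul_id_left[OF yq] phi_def mmul_assoc)
  finally show ?thesis .
qed

lemma phi_lin: "phi n (madd X Y) = madd (phi n X) (phi n Y)" "phi n (msub X Y) = msub (phi n X) (phi n Y)"
  "phi n (msmult c X) = msmult c (phi n X)"
  by (simp_all add: phi_def mmul_simps)

lemma so_iso: "lie_iso (2*n) (fs n 1) (2*n) (so_set (2*n))"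
proof -
  have b: "bij_betw (phi n) (fs n 1) (so_set (2*n))"
  proof (rule bij_betwI')
    fix X Y assume "X \<in> fs n 1" "Y \<in> fs n 1"
    then have mx: "is_mat (2*n) X" and my: "is_mat (2*n) Y" by (auto simp: fs_def)
    show "(phi n X = phi n Y) = (X = Y)"
    proof
      assume e: "phi n X = phi n Y"
      have "X = psi n (phi n X)" using psi_phi[OF mx] by simp
      also have "\<dots> = psi n (phi n Y)" using e by simp
      also have "\<dots> = Y" using psi_phi[OF my] .
      finally show "X = Y" .
    qed simp
  next
    fix X assume "X \<in> fs n 1" then show "phi n X \<in> so_set (2*n)" by (rule phi_so)
  next
    fix Y assume Y: "Y \<in> so_set (2*n)"
    have "is_mat (2*n) Y" using Y by (simp add: so_set_def)
    then have "Y = phi n (psi n Y)" by (simp add: phi_psi)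
    then show "\<exists>X\<in>fs n 1. Y = phi n X" using psi_fs[OF Y] by blast
  qed
  have k: "\<forall>X\<in>fs n 1. \<forall>Y\<in>fs n 1. phi n (bracket (2*n) X Y) = bracket (2*n) (phi n X) (phi n Y)"
  proof (intro ballI)
    fix X Y assume "X \<in> fs n 1" "Y \<in> fs n 1"
    then have "is_mat (2*n) X" "is_mat (2*n) Y" by (auto simp: fs_def)
    then show "phi n (bracket (2*n) X Y) = bracket (2*n) (phi n X) (phi n Y)"
      by (simp add: bracket_def phi_lin phi_mul)
  qed
  show ?thesis unfolding lie_iso_def
    by (rule exI[of _ "phi n"]) (use b k in \<open>simp add: phi_lin\<close>)
qed


theorem proposition4p2:
  fixes n :: nat and a :: complex
  assumes "n \<ge> 3" and "a \<noteq> 0"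
  shows "gim_relations n (2*n) (psiE n a) (psiF n a) (psiH n a)
    \<and> psi_image n a \<subseteq> sl_set (2*n)
    \<and> (a \<noteq> 1 \<and> a \<noteq> -1 \<longrightarrow> psi_image n a = sl_set (2*n))
    \<and> (a = 1 \<longrightarrow> lie_iso (2*n) (psi_image n a) (2*n) (sp_set n))
    \<and> (a = -1 \<longrightarrow> lie_iso (2*n) (psi_image n a) (2*n) (so_set (2*n)))"
proof -
  have r: "gim_relations n (2*n) (psiE n a) (psiF n a) (psiH n a)" by (rule relations[OF assms])
  have s: "psi_image n a \<subseteq> sl_set (2*n)" by (rule image_sl[OF assms])
  have t: "a \<noteq> 1 \<and> a \<noteq> -1 \<longrightarrow> psi_image n a = sl_set (2*n)" using image_sl_eq[OF assms] by blast
  have u: "a = 1 \<longrightarrow> lie_iso (2*n) (psi_image n a) (2*n) (sp_set n)" using sp_case[OF assms] by blast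
  have v: "a = -1 \<longrightarrow> lie_iso (2*n) (psi_image n a) (2*n) (so_set (2*n))"
  proof
    assume a1: "a = -1"
    then have "psi_image n a = fs n 1" using image_fs[OF assms] by simp
    then show "lie_iso (2*n) (psi_image n a) (2*n) (so_set (2*n))" using so_iso by simp
  qed
  show ?thesis using r s t u v by blast
qed


end
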